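(* Setting. Work under the setting of the context, in particular under condition [A]. Conclusion. There exists $\Delta>0$ with the following property. Let $x=x_n$ satisfy $x_n/n\to\alpha_0$ with $|a-\alpha_0|\le\Delta$, and let $\kappa_n\to0$. Set $$\mathcal B_n:=\{(m,y)\in\mathbb Z^2:1\le m\le[n\kappa_n],\ 1\le|y|\le[n\kappa_n]\}.$$ Then there are functions $\varepsilon_n(m,y)$ and $\theta_n(m,y)$ on $\mathcal B_n$ such that for all $(m,y)\in\mathcal B_n$ $$-nD\Big(1-\frac mn,\frac xn-\frac yn\Big)=-nD\Big(1,\frac xn\Big)+\Big(\lambda\big(\tfrac xn\big)+\varepsilon_n\Big)m+\Big(\mu\big(\tfrac xn\big)+\theta_n\Big)y,$$ and $$\beta_n:=\max_{(m,y)\in\mathcal B_n}\big(|\varepsilon_n(m,y)|+|\theta_n(m,y)|\big)\to0\quad\text{as }n\to\infty.$$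
   Context: Parameters and condition [A]. Fix an integer $v\ge1$ and $\mathbf p_{kj}\in(0,1)$, $k\ge0$, $1\le j\le2^{v-1}$, where $j$ numbers the binary words of length $v$ ending in $1$. Condition [A]: (i) the initial configuration contains a $1$; (ii) there are constants $1>\delta_1>\delta_2>0$ with $\delta_2\le\mathbf p_{kj}\le\delta_1$. Chain. Given $r(n)$, let $m_n=\sup\{i\le n:r_i(n)=1\}$. A new symbol $1$ is appended with probability $\mathbf p_{k_nj_n}$ and $0$ otherwise, where $k_n=n-m_n$ and $j_n$ is the number of the word $(r_{m_n-v+1}(n),\dots,r_{m_n}(n))$. Auxiliary Markov chain and the vector $(\tau,\zeta)$. $Y(n)=(n-m_n,(r_{m_n-v+1}(n),\dots,r_{m_n}(n)))$ and $y_0=(0,(0,\dots,0,1))$. Start $Y$ at $y_0$. Then $\tau$ is its first return time to $y_0$, and $\zeta$ is the number of $1$'s appended during the first $\tau$ steps. Parameters. $a=\mathbf E\zeta/\mathbf E\tau$ and $A(\lambda,\mu)=\ln\mathbf Ee^{\lambda\tau+\mu\zeta}$. Define $D(\theta,\alpha)=\sup\{\lambda\theta+\mu\alpha:A(\lambda,\mu)\le0\}$ and $D(\alpha)=D(1,\alpha)$. For $\alpha$ near $a$, $(\lambda(\alpha),\mu(\alpha))$ denotes the point with $A(\lambda(\alpha),\mu(\alpha))=0$ at which this supremum (with $\theta=1$) is attained, so $D(\alpha)=\lambda(\alpha)+\alpha\mu(\alpha)$. *)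

theory Defs
  imports "HOL-Analysis.Analysis"
begin

text \<open>States of the auxiliary Markov chain Y: pairs (k, w), where k = n - m_n and
  w is the binary word (r_{m_n-v+1},...,r_{m_n}) of length v ending in 1 (True = symbol 1).
  The parameters p_{kj} are indexed directly by the word w instead of its number j.\<close>

type_synonym state = "nat \<times> bool list"

definition last_v :: "nat \<Rightarrow> bool list \<Rightarrow> bool list" where
  "last_v v xs = drop (length xs - v) xs"

definition y0 :: "nat \<Rightarrow> state" where
  "y0 v = (0, replicate (v - 1) False @ [True])"

definition ystep :: "nat \<Rightarrow> state \<Rightarrow> bool \<Rightarrow> state" where
  "ystep v s b = (if b then (0, last_v v (snd s @ replicate (fst s) False @ [True]))
                  else (Suc (fst s), snd s))"

definition trans_prob :: "(nat \<Rightarrow> bool list \<Rightarrow> real) \<Rightarrow> state \<Rightarrow> bool \<Rightarrow> real" where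
  "trans_prob p s b = (if b then p (fst s) (snd s) else 1 - p (fst s) (snd s))"

fun path_prob :: "(nat \<Rightarrow> bool list \<Rightarrow> real) \<Rightarrow> nat \<Rightarrow> state \<Rightarrow> bool list \<Rightarrow> real" where
  "path_prob p v s [] = 1"
| "path_prob p v s (b # bs) = trans_prob p s b * path_prob p v (ystep v s b) bs"

definition yrun :: "nat \<Rightarrow> state \<Rightarrow> bool list \<Rightarrow> state" where
  "yrun v s bs = foldl (ystep v) s bs"

text \<open>Sequences of appended symbols along which Y, started at y0, returns to y0 for the
  first time exactly at the end: these are the outcomes of the first excursion; tau is the
  length and zeta the number of appended 1's.\<close>
definition first_return :: "nat \<Rightarrow> bool list \<Rightarrow> bool" where
  "first_return v bs \<longleftrightarrow> bs \<noteq> [] \<and> yrun v (y0 v) bs = y0 v \<and>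
     (\<forall>i. 0 < i \<and> i < length bs \<longrightarrow> yrun v (y0 v) (take i bs) \<noteq> y0 v)"

definition tau_of :: "bool list \<Rightarrow> nat" where "tau_of bs = length bs"
definition zeta_of :: "bool list \<Rightarrow> nat" where "zeta_of bs = count_list bs True"

definition excursion_E :: "(nat \<Rightarrow> bool list \<Rightarrow> real) \<Rightarrow> nat \<Rightarrow> (nat \<Rightarrow> nat \<Rightarrow> real) \<Rightarrow> ennreal" where
  "excursion_E p v f = (\<integral>\<^sup>+ bs. (if first_return v bs
       then ennreal (path_prob p v (y0 v) bs * f (tau_of bs) (zeta_of bs)) else 0) \<partial>count_space UNIV)"

definition a_param :: "(nat \<Rightarrow> bool list \<Rightarrow> real) \<Rightarrow> nat \<Rightarrow> real" where
  "a_param p v = enn2real (excursion_E p v (\<lambda>t z. real z)) / enn2real (excursion_E p v (\<lambda>t z. real t))"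

definition A_fun :: "(nat \<Rightarrow> bool list \<Rightarrow> real) \<Rightarrow> nat \<Rightarrow> real \<Rightarrow> real \<Rightarrow> ereal" where
  "A_fun p v l m = (let E = excursion_E p v (\<lambda>t z. exp (l * real t + m * real z)) in
      if E = \<infinity> then \<infinity> else ereal (ln (enn2real E)))"

definition D_fun :: "(nat \<Rightarrow> bool list \<Rightarrow> real) \<Rightarrow> nat \<Rightarrow> real \<Rightarrow> real \<Rightarrow> real" where
  "D_fun p v \<theta> \<alpha> = Sup {l * \<theta> + m * \<alpha> | l m. A_fun p v l m \<le> 0}"

definition lam_mu :: "(nat \<Rightarrow> bool list \<Rightarrow> real) \<Rightarrow> nat \<Rightarrow> real \<Rightarrow> real \<times> real" where
  "lam_mu p v \<alpha> = (SOME (l, m). A_fun p v l m = 0 \<and> l + \<alpha> * m = D_fun p v 1 \<alpha>)"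

definition lam :: "(nat \<Rightarrow> bool list \<Rightarrow> real) \<Rightarrow> nat \<Rightarrow> real \<Rightarrow> real" where
  "lam p v \<alpha> = fst (lam_mu p v \<alpha>)"
definition mu :: "(nat \<Rightarrow> bool list \<Rightarrow> real) \<Rightarrow> nat \<Rightarrow> real \<Rightarrow> real" where
  "mu p v \<alpha> = snd (lam_mu p v \<alpha>)"

definition B_set :: "real \<Rightarrow> nat \<Rightarrow> (int \<times> int) set" where
  "B_set \<kappa> n = {(m, y). 1 \<le> m \<and> m \<le> \<lfloor>real n * \<kappa>\<rfloor> \<and> 1 \<le> \<bar>y\<bar> \<and> \<bar>y\<bar> \<le> \<lfloor>real n * \<kappa>\<rfloor>}"

end

theory Submission
  imports Defs
begin



definition valid :: "nat \<Rightarrow> state \<Rightarrow> bool" where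
  "valid v s \<longleftrightarrow> length (snd s) = v \<and> last (snd s) = True"

definition hit :: "nat \<Rightarrow> state \<Rightarrow> bool list \<Rightarrow> bool" where
  "hit v s bs \<longleftrightarrow> bs \<noteq> [] \<and> yrun v s bs = y0 v \<and>
     (\<forall>i. 0 < i \<and> i < length bs \<longrightarrow> yrun v s (take i bs) \<noteq> y0 v)"

definition nohit :: "nat \<Rightarrow> state \<Rightarrow> bool list \<Rightarrow> bool" where
  "nohit v s bs \<longleftrightarrow> (\<forall>i. 0 < i \<and> i \<le> length bs \<longrightarrow> yrun v s (take i bs) \<noteq> y0 v)"

lemma yrun_Nil[simp]: "yrun v s [] = s" by (simp add: yrun_def)
lemma yrun_Cons[simp]: "yrun v s (b # bs) = yrun v (ystep v s b) bs" by (simp add: yrun_def)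

lemma first_return_hit: "first_return v bs = hit v (y0 v) bs"
  by (simp add: first_return_def hit_def)

lemma hit_Nil[simp]: "\<not> hit v s []" by (simp add: hit_def)

lemma hit_Cons: "hit v s (b # bs) \<longleftrightarrow> (if ystep v s b = y0 v then bs = [] else hit v (ystep v s b) bs)"
proof (cases "ystep v s b = y0 v")
  case True
  show ?thesis
  proof (cases bs)
    case Nil then show ?thesis using True by (simp add: hit_def)
  next
    case (Cons c cs)
    have "\<not> hit v s (b # bs)" unfolding hit_def using True Cons
      by (auto intro!: exI[of _ 1])
    then show ?thesis using True Cons by simp
  qed
next
  case False
  have "hit v s (b # bs) \<longleftrightarrow> hit v (ystep v s b) bs"
  proof
    assume h: "hit v s (b # bs)"
    then have ne: "bs \<noteq> []" using False by (auto simp: hit_def)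
    show "hit v (ystep v s b) bs" unfolding hit_def
    proof (intro conjI allI impI)
      show "bs \<noteq> []" by fact
      show "yrun v (ystep v s b) bs = y0 v" using h by (simp add: hit_def)
      fix i assume i: "0 < i \<and> i < length bs"
      have "yrun v s (take (Suc i) (b # bs)) \<noteq> y0 v" using h i by (auto simp: hit_def)
      then show "yrun v (ystep v s b) (take i bs) \<noteq> y0 v" by simp
    qed
  next
    assume h: "hit v (ystep v s b) bs"
    show "hit v s (b # bs)" unfolding hit_def
    proof (intro conjI allI impI)
      show "b # bs \<noteq> []" by simp
      show "yrun v s (b # bs) = y0 v" using h by (simp add: hit_def)
      fix i assume i: "0 < i \<and> i < length (b # bs)"
      show "yrun v s (take i (b # bs)) \<noteq> y0 v"
      proof (cases "i = 1")
        case True then show ?thesis using False by simp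
      next
        case ne: False
        then obtain j where j: "i = Suc j" "0 < j" using i by (cases i) auto
        then have "yrun v (ystep v s b) (take j bs) \<noteq> y0 v" using h i by (auto simp: hit_def)
        then show ?thesis using j by simp
      qed
    qed
  qed
  then show ?thesis using False by simp
qed

lemma nohit_Nil[simp]: "nohit v s []" by (simp add: nohit_def)

lemma nohit_Cons: "nohit v s (b # bs) \<longleftrightarrow> ystep v s b \<noteq> y0 v \<and> nohit v (ystep v s b) bs"
proof
  assume h: "nohit v s (b # bs)"
  have "yrun v s (take 1 (b # bs)) \<noteq> y0 v" using spec[OF h[unfolded nohit_def], of 1] by simp
  then have 1: "ystep v s b \<noteq> y0 v" by simp
  have "nohit v (ystep v s b) bs" unfolding nohit_def
  proof (intro allI impI)
    fix i assume i: "0 < i \<and> i \<le> length bs"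
    have "yrun v s (take (Suc i) (b # bs)) \<noteq> y0 v" using h i unfolding nohit_def by auto
    then show "yrun v (ystep v s b) (take i bs) \<noteq> y0 v" by simp
  qed
  with 1 show "ystep v s b \<noteq> y0 v \<and> nohit v (ystep v s b) bs" by simp
next
  assume h: "ystep v s b \<noteq> y0 v \<and> nohit v (ystep v s b) bs"
  show "nohit v s (b # bs)" unfolding nohit_def
  proof (intro allI impI)
    fix i assume i: "0 < i \<and> i \<le> length (b # bs)"
    show "yrun v s (take i (b # bs)) \<noteq> y0 v"
    proof (cases "i = 1")
      case True then show ?thesis using h by simp
    next
      case ne: False
      then obtain j where j: "i = Suc j" "0 < j" using i by (cases i) auto
      then have "yrun v (ystep v s b) (take j bs) \<noteq> y0 v" using h i by (auto simp: nohit_def)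
      then show ?thesis using j by simp
    qed
  qed
qed

lemma fin_len: "finite {bs::bool list. length bs = n}"
  using finite_lists_length_eq[of "UNIV::bool set" n] by simp

lemma sum_len_Suc:
  fixes F :: "bool list \<Rightarrow> real"
  shows "(\<Sum>bs\<in>{bs. length bs = Suc n}. F bs) = (\<Sum>bs\<in>{bs. length bs = n}. F (True # bs) + F (False # bs))"
proof -
  let ?A = "{bs::bool list. length bs = n}"
  have eq: "{bs::bool list. length bs = Suc n} = Cons True ` ?A \<union> Cons False ` ?A"
  proof (rule set_eqI)
    fix xs :: "bool list"
    show "xs \<in> {bs. length bs = Suc n} \<longleftrightarrow> xs \<in> Cons True ` ?A \<union> Cons False ` ?A"
    proof (cases xs)
      case Nil then show ?thesis by auto
    next
      case (Cons a l) then show ?thesis by (cases a) auto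
    qed
  qed
  have fin: "finite ?A" by (rule fin_len)
  have "(\<Sum>bs\<in>{bs. length bs = Suc n}. F bs) = (\<Sum>bs\<in>Cons True ` ?A. F bs) + (\<Sum>bs\<in>Cons False ` ?A. F bs)"
    unfolding eq by (rule sum.union_disjoint) (auto simp: fin)
  also have "\<dots> = (\<Sum>bs\<in>?A. F (True # bs)) + (\<Sum>bs\<in>?A. F (False # bs))"
    by (simp add: sum.reindex)
  finally show ?thesis by (simp add: sum.distrib)
qed

fun Qf :: "(nat \<Rightarrow> bool list \<Rightarrow> real) \<Rightarrow> nat \<Rightarrow> nat \<Rightarrow> state \<Rightarrow> real" where
  "Qf p v 0 s = 0"
| "Qf p v (Suc n) s = (\<Sum>b\<in>UNIV. trans_prob p s b *
     (if ystep v s b = y0 v then (if n = 0 then 1 else 0) else Qf p v n (ystep v s b)))"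

fun Gf :: "(nat \<Rightarrow> bool list \<Rightarrow> real) \<Rightarrow> nat \<Rightarrow> nat \<Rightarrow> state \<Rightarrow> real" where
  "Gf p v 0 s = 1"
| "Gf p v (Suc n) s = (\<Sum>b\<in>UNIV. trans_prob p s b *
     (if ystep v s b = y0 v then 0 else Gf p v n (ystep v s b)))"

lemma UNIV_bool_sum: "(\<Sum>b\<in>(UNIV::bool set). f b) = f True + f False"
  by (simp add: UNIV_bool add.commute)

lemma Q_eq: "(\<Sum>bs\<in>{bs. length bs = n}. if hit v s bs then path_prob p v s bs else 0) = Qf p v n s"
proof (induction n arbitrary: s)
  case 0
  have "{bs::bool list. length bs = 0} = {[]}" by auto
  then show ?case by simp
next
  case (Suc n)
  have "(\<Sum>bs\<in>{bs. length bs = Suc n}. if hit v s bs then path_prob p v s bs else 0)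
     = (\<Sum>bs\<in>{bs. length bs = n}. (if hit v s (True # bs) then path_prob p v s (True # bs) else 0)
            + (if hit v s (False # bs) then path_prob p v s (False # bs) else 0))"
    by (rule sum_len_Suc)
  also have "\<dots> = (\<Sum>b\<in>UNIV. trans_prob p s b *
     (if ystep v s b = y0 v then (if n = 0 then 1 else 0) else Qf p v n (ystep v s b)))"
  proof -
    have one: "(\<Sum>bs\<in>{bs. length bs = n}. (if hit v s (b # bs) then path_prob p v s (b # bs) else 0))
      = trans_prob p s b * (if ystep v s b = y0 v then (if n = 0 then 1 else 0) else Qf p v n (ystep v s b))" for b
    proof (cases "ystep v s b = y0 v")
      case True
      have "(\<Sum>bs\<in>{bs. length bs = n}. (if hit v s (b # bs) then path_prob p v s (b # bs) else 0))
          = (\<Sum>bs\<in>{bs. length bs = n}. (if bs = ([]::bool list) then trans_prob p s b else 0))"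
        by (rule sum.cong) (use True in \<open>auto simp: hit_Cons\<close>)
      also have "\<dots> = (if n = 0 then trans_prob p s b else 0)"
      proof (cases n)
        case 0
        have "{bs::bool list. length bs = 0} = {[]}" by auto
        then show ?thesis using 0 by simp
      next
        case (Suc k)
        then show ?thesis by (intro trans[OF sum.neutral]) auto
      qed
      finally show ?thesis using True by simp
    next
      case False
      have "(\<Sum>bs\<in>{bs. length bs = n}. (if hit v s (b # bs) then path_prob p v s (b # bs) else 0))
          = (\<Sum>bs\<in>{bs. length bs = n}. trans_prob p s b * (if hit v (ystep v s b) bs then path_prob p v (ystep v s b) bs else 0))"
        apply (rule sum.cong[OF refl]) using False by (auto simp: hit_Cons)
      also have "\<dots> = trans_prob p s b * Qf p v n (ystep v s b)"
        by (simp add: sum_distrib_left[symmetric] Suc.IH)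
      finally show ?thesis using False by simp
    qed
    show ?thesis by (simp add: sum.distrib one UNIV_bool_sum)
  qed
  finally show ?case by simp
qed

lemma G_eq: "(\<Sum>bs\<in>{bs. length bs = n}. if nohit v s bs then path_prob p v s bs else 0) = Gf p v n s"
proof (induction n arbitrary: s)
  case 0
  have "{bs::bool list. length bs = 0} = {[]}" by auto
  then show ?case by simp
next
  case (Suc n)
  have "(\<Sum>bs\<in>{bs. length bs = Suc n}. if nohit v s bs then path_prob p v s bs else 0)
     = (\<Sum>bs\<in>{bs. length bs = n}. (if nohit v s (True # bs) then path_prob p v s (True # bs) else 0)
            + (if nohit v s (False # bs) then path_prob p v s (False # bs) else 0))"
    by (rule sum_len_Suc)
  also have "\<dots> = (\<Sum>b\<in>UNIV. trans_prob p s b *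
     (if ystep v s b = y0 v then 0 else Gf p v n (ystep v s b)))"
  proof -
    have one: "(\<Sum>bs\<in>{bs. length bs = n}. (if nohit v s (b # bs) then path_prob p v s (b # bs) else 0))
      = trans_prob p s b * (if ystep v s b = y0 v then 0 else Gf p v n (ystep v s b))" for b
    proof (cases "ystep v s b = y0 v")
      case True
      then show ?thesis by (simp add: nohit_Cons)
    next
      case False
      have "(\<Sum>bs\<in>{bs. length bs = n}. (if nohit v s (b # bs) then path_prob p v s (b # bs) else 0))
          = (\<Sum>bs\<in>{bs. length bs = n}. trans_prob p s b * (if nohit v (ystep v s b) bs then path_prob p v (ystep v s b) bs else 0))"
        apply (rule sum.cong[OF refl]) using False by (auto simp: nohit_Cons)
      also have "\<dots> = trans_prob p s b * Gf p v n (ystep v s b)"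
        by (simp add: sum_distrib_left[symmetric] Suc.IH)
      finally show ?thesis using False by simp
    qed
    show ?thesis by (simp add: sum.distrib one UNIV_bool_sum)
  qed
  finally show ?case by simp
qed

lemma trans_sum: "trans_prob p s True + trans_prob p s False = 1"
  by (simp add: trans_prob_def)

lemma QG_total: "(\<Sum>k\<le>n. Qf p v k s) + Gf p v n s = 1"
proof (induction n arbitrary: s)
  case 0 then show ?case by simp
next
  case (Suc n)
  define X where "X b = (\<Sum>k\<le>n. (if ystep v s b = y0 v then (if k = 0 then 1 else 0) else Qf p v k (ystep v s b)))" for b
  define G where "G b = (if ystep v s b = y0 v then 0 else Gf p v n (ystep v s b))" for b
  have XG: "X b + G b = 1" for b
    using Suc.IH[of "ystep v s b"] by (cases "ystep v s b = y0 v") (auto simp: X_def G_def)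
  have "(\<Sum>k\<le>Suc n. Qf p v k s) = (\<Sum>k\<le>n. Qf p v (Suc k) s)"
    by (simp only: sum.atMost_Suc_shift Qf.simps(1) add_0_left)
  also have "\<dots> = trans_prob p s True * X True + trans_prob p s False * X False"
    by (simp add: X_def UNIV_bool_sum sum.distrib sum_distrib_left)
  finally have "(\<Sum>k\<le>Suc n. Qf p v k s) + Gf p v (Suc n) s
     = trans_prob p s True * (X True + G True) + trans_prob p s False * (X False + G False)"
    by (simp add: G_def UNIV_bool_sum algebra_simps)
  then show ?case by (simp add: XG trans_sum)
qed




locale ctx =
  fixes v :: nat and p :: "nat \<Rightarrow> bool list \<Rightarrow> real" and d1 d2 :: real
  assumes v1: "v \<ge> 1" and d2pos: "0 < d2" and d12: "d2 < d1" and d1lt: "d1 < 1"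
    and pb: "\<And>k w. length w = v \<Longrightarrow> last w = True \<Longrightarrow> d2 \<le> p k w \<and> p k w \<le> d1"
begin

lemma valid_y0: "valid v (y0 v)"
  using v1 by (simp add: valid_def y0_def)

lemma valid_ystep: "valid v s \<Longrightarrow> valid v (ystep v s b)"
  using v1 by (cases s) (auto simp: valid_def ystep_def last_v_def)

lemma valid_yrun: "valid v s \<Longrightarrow> valid v (yrun v s bs)"
  by (induction bs arbitrary: s) (auto simp: valid_ystep)

lemma pv: "valid v s \<Longrightarrow> d2 \<le> p (fst s) (snd s) \<and> p (fst s) (snd s) \<le> d1"
  using pb by (simp add: valid_def)

lemma trans_nonneg: "valid v s \<Longrightarrow> 0 \<le> trans_prob p s b"
  using pv[of s] d2pos d1lt by (auto simp: trans_prob_def)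

lemma transT: "valid v s \<Longrightarrow> d2 \<le> trans_prob p s True \<and> trans_prob p s True \<le> d1"
  using pv[of s] by (auto simp: trans_prob_def)

lemma transF: "valid v s \<Longrightarrow> 1 - d1 \<le> trans_prob p s False \<and> trans_prob p s False \<le> 1 - d2"
  using pv[of s] by (auto simp: trans_prob_def)

lemma path_nonneg: "valid v s \<Longrightarrow> 0 \<le> path_prob p v s bs"
proof (induction bs arbitrary: s)
  case Nil then show ?case by simp
next
  case (Cons b bs)
  show ?case using Cons.IH[OF valid_ystep[OF Cons.prems]] trans_nonneg[OF Cons.prems, of b] by simp
qed

lemma Qf_nonneg: "valid v s \<Longrightarrow> 0 \<le> Qf p v n s"
proof (induction n arbitrary: s)
  case 0 then show ?case by simp
next
  case (Suc n)
  have "0 \<le> trans_prob p s b * (if ystep v s b = y0 v then (if n = 0 then 1 else 0) else Qf p v n (ystep v s b))" for b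
    using Suc.IH[OF valid_ystep[OF Suc.prems]] trans_nonneg[OF Suc.prems, of b] by (intro mult_nonneg_nonneg) auto
  then show ?case by (simp only: Qf.simps) (intro sum_nonneg, blast)
qed

lemma Gf_nonneg: "valid v s \<Longrightarrow> 0 \<le> Gf p v n s"
proof (induction n arbitrary: s)
  case 0 then show ?case by simp
next
  case (Suc n)
  have "0 \<le> trans_prob p s b * (if ystep v s b = y0 v then 0 else Gf p v n (ystep v s b))" for b
    using Suc.IH[OF valid_ystep[OF Suc.prems]] trans_nonneg[OF Suc.prems, of b] by (intro mult_nonneg_nonneg) auto
  then show ?case by (simp only: Gf.simps) (intro sum_nonneg, blast)
qed

lemma Gf_Suc_le: "valid v s \<Longrightarrow> Gf p v (Suc n) s \<le> Gf p v n s"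
proof (induction n arbitrary: s)
  case 0
  have "Gf p v (Suc 0) s \<le> trans_prob p s True * 1 + trans_prob p s False * 1"
    using trans_nonneg[OF 0] by (auto simp: UNIV_bool_sum intro!: add_mono mult_left_mono)
  then show ?case using trans_sum[of p s] by simp
next
  case (Suc n)
  have "Gf p v (Suc (Suc n)) s = (\<Sum>b\<in>UNIV. trans_prob p s b *
     (if ystep v s b = y0 v then 0 else Gf p v (Suc n) (ystep v s b)))" by simp
  also have "\<dots> \<le> (\<Sum>b\<in>UNIV. trans_prob p s b *
     (if ystep v s b = y0 v then 0 else Gf p v n (ystep v s b)))"
  proof (intro sum_mono mult_left_mono)
    fix b
    show "0 \<le> trans_prob p s b" by (rule trans_nonneg[OF Suc.prems])
    show "(if ystep v s b = y0 v then 0 else Gf p v (Suc n) (ystep v s b)) \<le> (if ystep v s b = y0 v then 0 else Gf p v n (ystep v s b))"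
      using Suc.IH[OF valid_ystep[OF Suc.prems, of b]] by (simp del: Gf.simps)
  qed
  finally show ?case by simp
qed

lemma Gf_add_le: "valid v s \<Longrightarrow> Gf p v (n + m) s \<le> Gf p v n s"
proof (induction m)
  case 0 then show ?case by simp
next
  case (Suc m) then show ?case using Gf_Suc_le[of s "n + m"] by simp
qed

lemma Gf_le1: "valid v s \<Longrightarrow> Gf p v n s \<le> 1"
  using Gf_add_le[of s 0 n] by simp

lemma Q_le_G: "valid v s \<Longrightarrow> Qf p v (Suc n) s \<le> Gf p v n s"
proof (induction n arbitrary: s)
  case 0
  have "Qf p v (Suc 0) s \<le> trans_prob p s True * 1 + trans_prob p s False * 1"
    using trans_nonneg[OF 0] by (auto simp: UNIV_bool_sum intro!: add_mono mult_left_mono)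
  then show ?case using trans_sum[of p s] by simp
next
  case (Suc n)
  have "Qf p v (Suc (Suc n)) s = (\<Sum>b\<in>UNIV. trans_prob p s b *
     (if ystep v s b = y0 v then 0 else Qf p v (Suc n) (ystep v s b)))" by simp
  also have "\<dots> \<le> (\<Sum>b\<in>UNIV. trans_prob p s b *
     (if ystep v s b = y0 v then 0 else Gf p v n (ystep v s b)))"
  proof (intro sum_mono mult_left_mono)
    fix b
    show "0 \<le> trans_prob p s b" by (rule trans_nonneg[OF Suc.prems])
    show "(if ystep v s b = y0 v then 0 else Qf p v (Suc n) (ystep v s b)) \<le> (if ystep v s b = y0 v then 0 else Gf p v n (ystep v s b))"
      using Suc.IH[OF valid_ystep[OF Suc.prems, of b]] by (simp del: Gf.simps Qf.simps)
  qed
  finally show ?case by simp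
qed

lemma ystep_hit:
  assumes "v - 1 \<le> k" "length w = v"
  shows "ystep v (k, w) True = y0 v"
proof -
  have "last_v v (w @ replicate k False @ [True]) = drop (Suc k) (w @ replicate k False @ [True])"
    using assms by (simp add: last_v_def)
  also have "\<dots> = drop (Suc k - v) (replicate k False @ [True])"
    using assms by simp
  also have "\<dots> = replicate (v - 1) False @ [True]"
    using assms v1 by (simp add: drop_append)
  finally show ?thesis by (simp add: ystep_def y0_def)
qed

lemma tailB:
  assumes B0: "0 \<le> B" and GB: "\<And>s'. valid v s' \<Longrightarrow> Gf p v n s' \<le> B"
  shows "valid v (k, w) \<Longrightarrow> v - 1 \<le> k + j \<Longrightarrow> Gf p v (n + j + 1) (k, w) \<le> B * (1 - d2 * (1 - d1) ^ j)"
proof (induction j arbitrary: k)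
  case 0
  then have hk: "v - 1 \<le> k" by simp
  have lw: "length w = v" using 0 by (simp add: valid_def)
  have yT: "ystep v (k, w) True = y0 v" by (rule ystep_hit[OF hk lw])
  have yF: "ystep v (k, w) False = (Suc k, w)" by (simp add: ystep_def)
  have vF: "valid v (Suc k, w)" using 0 by (simp add: valid_def)
  have ne: "(Suc k, w) \<noteq> y0 v" by (simp add: y0_def)
  have "Gf p v (n + 0 + 1) (k, w) = trans_prob p (k, w) False * Gf p v n (Suc k, w)"
    using yT yF ne by (simp add: UNIV_bool_sum)
  also have "\<dots> \<le> (1 - d2) * B"
    using transF[OF 0(1)] GB[OF vF] Gf_nonneg[OF vF] B0 d12 d1lt
    by (intro mult_mono) auto
  finally show ?case by (simp add: mult.commute)
next
  case (Suc j)
  have lw: "length w = v" using Suc by (simp add: valid_def)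
  have yF: "ystep v (k, w) False = (Suc k, w)" by (simp add: ystep_def)
  have vF: "valid v (Suc k, w)" using Suc by (simp add: valid_def)
  have ne: "(Suc k, w) \<noteq> y0 v" by (simp add: y0_def)
  define sT where "sT = ystep v (k, w) True"
  have vT: "valid v sT" unfolding sT_def using Suc.prems valid_ystep by blast
  define T where "T = trans_prob p (k, w) True"
  define F where "F = trans_prob p (k, w) False"
  have TF: "T + F = 1" unfolding T_def F_def by (rule trans_sum)
  have F1: "1 - d1 \<le> F" unfolding F_def using transF[OF Suc.prems(1)] by simp
  have T0: "0 \<le> T" unfolding T_def using transT[OF Suc.prems(1)] d2pos by simp
  have X1: "(if sT = y0 v then 0 else Gf p v (n + j + 1) sT) \<le> B"
    using Gf_add_le[OF vT, of n "j+1"] GB[OF vT] B0 by (simp add: add.assoc)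
  have X2: "Gf p v (n + j + 1) (Suc k, w) \<le> B * (1 - d2 * (1 - d1) ^ j)"
    using Suc.IH[of "Suc k"] vF Suc.prems(2) by simp
  have "Gf p v (n + Suc j + 1) (k, w) = T * (if sT = y0 v then 0 else Gf p v (n + j + 1) sT)
        + F * Gf p v (n + j + 1) (Suc k, w)"
    using yF ne by (simp add: UNIV_bool_sum T_def F_def sT_def)
  also have "\<dots> \<le> T * B + F * (B * (1 - d2 * (1 - d1) ^ j))"
    using T0 F1 d1lt X1 X2 by (intro add_mono mult_left_mono) auto
  also have "\<dots> = B * (1 - F * (d2 * (1 - d1) ^ j))"
  proof -
    have "T * B + F * (B * (1 - d2 * (1 - d1) ^ j)) = B * (T + F) - B * (F * (d2 * (1 - d1) ^ j))"
      by (simp add: algebra_simps)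
    then show ?thesis using TF by (simp add: right_diff_distrib)
  qed
  also have "\<dots> \<le> B * (1 - (1 - d1) * (d2 * (1 - d1) ^ j))"
    using F1 B0 d2pos d1lt by (intro mult_left_mono diff_left_mono mult_right_mono) auto
  finally show ?case by (simp add: algebra_simps)
qed

definition q :: real where "q = d2 * (1 - d1) ^ (v - 1)"

lemma q_pos: "0 < q" and q_lt1: "q < 1"
proof -
  show "0 < q" unfolding q_def using d2pos d1lt by simp
  have "(1 - d1) ^ (v - 1) \<le> 1" using d12 d2pos d1lt by (intro power_le_one) auto
  then have "q \<le> d2" unfolding q_def using d2pos by (simp add: mult_left_le)
  then show "q < 1" using d12 d1lt by simp
qed

lemma G_step: "valid v s \<Longrightarrow> 0 \<le> B \<Longrightarrow> (\<And>s'. valid v s' \<Longrightarrow> Gf p v n s' \<le> B) \<Longrightarrow> Gf p v (n + v) s \<le> B * (1 - q)"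
  using tailB[of B n "fst s" "snd s" "v - 1"] v1 by (cases s) (simp add: q_def)

lemma G_geo: "valid v s \<Longrightarrow> Gf p v (j * v) s \<le> (1 - q) ^ j"
proof (induction j arbitrary: s)
  case 0 then show ?case by simp
next
  case (Suc j)
  have "Gf p v (j * v + v) s \<le> (1 - q) ^ j * (1 - q)"
    using Suc q_lt1 by (intro G_step) auto
  then show ?case by (simp add: add.commute mult.commute)
qed

lemma G_bound: "valid v s \<Longrightarrow> Gf p v n s \<le> (1 - q) ^ (n div v)"
proof -
  assume vs: "valid v s"
  have "n = (n div v) * v + n mod v" by simp
  then have "Gf p v n s \<le> Gf p v ((n div v) * v) s" using Gf_add_le[OF vs, of "(n div v) * v" "n mod v"] by simp
  also have "\<dots> \<le> (1 - q) ^ (n div v)" by (rule G_geo[OF vs])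
  finally show ?thesis .
qed

end



lemma exp_strict: "x \<noteq> 0 \<Longrightarrow> 1 + x < exp (x::real)"
proof -
  assume x: "x \<noteq> 0"
  show ?thesis
  proof (cases "x < -2")
    case True then show ?thesis using exp_gt_zero[of x] by linarith
  next
    case False
    then have "0 \<le> 1 + x / 2" by simp
    then have "(1 + x / 2)^2 \<le> exp (x/2) ^ 2"
      using exp_ge_add_one_self[of "x/2"] by (intro power_mono) auto
    also have "exp (x/2) ^ 2 = exp x" by (simp add: exp_double[symmetric] power2_eq_square exp_add[symmetric])
    finally have "(1 + x/2)^2 \<le> exp x" .
    moreover have "(1 + x/2)^2 = 1 + x + x^2/4" by (simp add: power2_eq_square field_simps)
    moreover have "0 < x^2/4" using x by simp
    ultimately show ?thesis by linarith
  qed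
qed

lemma exp_convex_le: "0 \<le> t \<Longrightarrow> t \<le> 1 \<Longrightarrow> exp (t * x + (1 - t) * y) \<le> t * exp x + (1 - t) * exp (y::real)"
proof -
  assume t: "0 \<le> t" "t \<le> 1"
  define m where "m = t * x + (1 - t) * y"
  have ex: "exp x = exp m * exp (x - m)" by (simp add: exp_diff)
  have ey: "exp y = exp m * exp (y - m)" by (simp add: exp_diff)
  have "t * exp x + (1 - t) * exp y \<ge> t * (exp m * (1 + (x - m))) + (1 - t) * (exp m * (1 + (y - m)))"
    unfolding ex ey using t by (intro add_mono mult_left_mono) auto
  also have "t * (exp m * (1 + (x - m))) + (1 - t) * (exp m * (1 + (y - m))) = exp m"
    by (simp add: m_def algebra_simps)
  finally show ?thesis by (simp add: m_def)
qed

lemma exp_convex_less: "0 < t \<Longrightarrow> t < 1 \<Longrightarrow> x \<noteq> y \<Longrightarrow> exp (t * x + (1 - t) * y) < t * exp x + (1 - t) * exp (y::real)"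
proof -
  assume t: "0 < t" "t < 1" and xy: "x \<noteq> y"
  define m where "m = t * x + (1 - t) * y"
  have "x - m = (1 - t) * (x - y)" by (simp add: m_def algebra_simps)
  then have xm: "x - m \<noteq> 0" using t xy by simp
  have ex: "exp x = exp m * exp (x - m)" by (simp add: exp_diff)
  have ey: "exp y = exp m * exp (y - m)" by (simp add: exp_diff)
  have "t * exp x + (1 - t) * exp y > t * (exp m * (1 + (x - m))) + (1 - t) * (exp m * (1 + (y - m)))"
    unfolding ex ey using t exp_strict[OF xm] exp_ge_add_one_self[of "y - m"]
    by (intro add_less_le_mono mult_strict_left_mono mult_left_mono) auto
  also have "t * (exp m * (1 + (x - m))) + (1 - t) * (exp m * (1 + (y - m))) = exp m"
    by (simp add: m_def algebra_simps)
  finally show ?thesis by (simp add: m_def)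
qed

context ctx begin

definition Wt :: "bool list \<Rightarrow> real" where
  "Wt bs = (if first_return v bs then path_prob p v (y0 v) bs else 0)"

definition Sg :: "nat \<Rightarrow> (nat \<Rightarrow> real) \<Rightarrow> real" where
  "Sg n g = (\<Sum>bs\<in>{bs. length bs = n}. Wt bs * g (zeta_of bs))"

lemma Wt_nonneg: "0 \<le> Wt bs"
  unfolding Wt_def using path_nonneg[OF valid_y0] by simp

lemma Sg_nonneg: "(\<And>z. 0 \<le> g z) \<Longrightarrow> 0 \<le> Sg n g"
  unfolding Sg_def by (intro sum_nonneg mult_nonneg_nonneg Wt_nonneg) auto

lemma bridge:
  assumes f0: "\<And>t z. 0 \<le> f t z"
  shows "excursion_E p v f = (\<Sum>n. ennreal (Sg n (f n)))"
proof -
  define F where "F bs = (if first_return v bs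
       then ennreal (path_prob p v (y0 v) bs * f (tau_of bs) (zeta_of bs)) else 0)" for bs
  have F_eq: "F bs = ennreal (Wt bs * f (length bs) (zeta_of bs))" for bs
    by (simp add: F_def Wt_def tau_of_def)
  have split: "F bs = (\<Sum>n. if n = length bs then F bs else 0)" for bs
    using sums_single[of "length bs" "\<lambda>_. F bs"] by (simp add: sums_iff)
  have "excursion_E p v f = (\<integral>\<^sup>+ bs. F bs \<partial>count_space UNIV)"
    by (simp add: excursion_E_def F_def)
  also have "\<dots> = (\<integral>\<^sup>+ bs. (\<Sum>n. if n = length bs then F bs else 0) \<partial>count_space UNIV)"
    by (subst split) (rule refl)
  also have "\<dots> = (\<Sum>n. \<integral>\<^sup>+ bs. (if n = length bs then F bs else 0) \<partial>count_space UNIV)"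
    by (rule nn_integral_suminf) simp
  also have "\<dots> = (\<Sum>n. ennreal (Sg n (f n)))"
  proof (rule suminf_cong)
    fix n
    have "(\<integral>\<^sup>+ bs. (if n = length bs then F bs else 0) \<partial>count_space UNIV)
        = (\<Sum>bs\<in>{bs. length bs = n}. (if n = length bs then F bs else 0))"
      by (rule nn_integral_count_space') (auto simp: fin_len)
    also have "\<dots> = (\<Sum>bs\<in>{bs. length bs = n}. ennreal (Wt bs * f n (zeta_of bs)))"
      by (rule sum.cong) (auto simp: F_eq)
    also have "\<dots> = ennreal (Sg n (f n))"
      unfolding Sg_def using Wt_nonneg f0 by (subst sum_ennreal) auto
    finally show "(\<integral>\<^sup>+ bs. (if n = length bs then F bs else 0) \<partial>count_space UNIV) = ennreal (Sg n (f n))" .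
  qed
  finally show ?thesis .
qed

definition Qn :: "nat \<Rightarrow> real" where "Qn n = Sg n (\<lambda>_. 1)"

lemma Qn_Qf: "Qn n = Qf p v n (y0 v)"
proof -
  have "Qn n = (\<Sum>bs\<in>{bs. length bs = n}. if hit v (y0 v) bs then path_prob p v (y0 v) bs else 0)"
    unfolding Qn_def Sg_def Wt_def first_return_hit by (rule sum.cong) auto
  then show ?thesis by (simp add: Q_eq)
qed

lemma Qn_nonneg: "0 \<le> Qn n"
  unfolding Qn_def by (rule Sg_nonneg) simp

definition rho :: real where "rho = root v (1 - q)"

lemma rho_pos: "0 < rho" and rho_lt1: "rho < 1"
  using q_pos q_lt1 v1 by (auto simp: rho_def)

lemma rho_pow: "rho ^ v = 1 - q"
  using q_pos q_lt1 v1 by (simp add: rho_def real_root_pow_pos2)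

lemma geo_bound: "(1 - q) ^ (n div v) \<le> rho ^ n / rho ^ v"
proof -
  have "(1 - q) ^ (n div v) = rho ^ (v * (n div v))" by (simp add: rho_pow[symmetric] power_mult)
  moreover have "rho ^ n = rho ^ (v * (n div v)) * rho ^ (n mod v)"
    by (simp add: power_add[symmetric])
  moreover have "rho ^ v \<le> rho ^ (n mod v)"
    using rho_pos rho_lt1 v1 by (intro power_decreasing) auto
  ultimately have "(1 - q) ^ (n div v) * rho ^ v \<le> rho ^ n"
    using rho_pos by (simp add: mult_left_mono)
  then show ?thesis using rho_pos by (simp add: field_simps)
qed

definition Kc :: real where "Kc = 1 / rho ^ v"

lemma Kc_pos: "0 < Kc" using rho_pos by (simp add: Kc_def)

lemma G_geo_bound: "Gf p v n (y0 v) \<le> Kc * rho ^ n"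
  using G_bound[OF valid_y0, where n=n] geo_bound[of n] by (simp add: Kc_def)

lemma Qn_bound: "Qn (Suc n) \<le> Kc * rho ^ n"
  using Q_le_G[OF valid_y0, where n=n] G_geo_bound[of n] by (simp add: Qn_Qf)

lemma Qn_0: "Qn 0 = 0" by (simp add: Qn_Qf)

lemma Qn_sums: "Qn sums 1"
proof -
  have "(\<lambda>n. Gf p v n (y0 v)) \<longlonglongrightarrow> 0"
  proof (rule tendsto_sandwich[of "\<lambda>_. 0" _ _ "\<lambda>n. Kc * rho ^ n"])
    show "\<forall>\<^sub>F n in sequentially. 0 \<le> Gf p v n (y0 v)" using Gf_nonneg[OF valid_y0] by simp
    show "\<forall>\<^sub>F n in sequentially. Gf p v n (y0 v) \<le> Kc * rho ^ n" using G_geo_bound by simp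
    show "(\<lambda>n. Kc * rho ^ n) \<longlonglongrightarrow> 0" using rho_pos rho_lt1
      by (intro tendsto_mult_right_zero LIMSEQ_power_zero) auto
  qed simp
  then have "(\<lambda>n. 1 - Gf p v n (y0 v)) \<longlonglongrightarrow> 1 - 0" by (intro tendsto_diff) auto
  moreover have "(\<Sum>i\<le>n. Qn i) = 1 - Gf p v n (y0 v)" for n
    using QG_total[where p=p and v=v and n=n and s="y0 v"] by (simp add: Qn_Qf)
  ultimately show ?thesis unfolding sums_def_le by simp
qed

definition gam :: real where "gam = (1 + rho) / 2"
definition Rr :: real where "Rr = ln (gam / rho)"

lemma gam_lt1: "gam < 1" and gam_gt: "rho < gam"
  using rho_lt1 by (auto simp: gam_def)

lemma Rr_pos: "0 < Rr"
  using gam_gt rho_pos by (simp add: Rr_def)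

lemma exp_Rr: "exp Rr = gam / rho"
  using gam_gt rho_pos by (simp add: Rr_def)

lemma Qn_exp_bound: "Qn (Suc n) * exp (Rr * real (Suc n)) \<le> Kc * exp Rr * gam ^ n"
proof -
  have "exp (Rr * real (Suc n)) = exp Rr * exp Rr ^ n"
    by (simp add: exp_of_nat_mult[symmetric] exp_add[symmetric] algebra_simps)
  then have "Qn (Suc n) * exp (Rr * real (Suc n)) \<le> Kc * rho ^ n * (exp Rr * exp Rr ^ n)"
    using Qn_bound[of n] by (simp add: mult_right_mono)
  also have "\<dots> = Kc * exp Rr * (rho * exp Rr) ^ n" by (simp add: power_mult_distrib)
  also have "rho * exp Rr = gam" using rho_pos by (simp add: exp_Rr)
  finally show ?thesis .
qed

lemma summable_Qexp: "summable (\<lambda>n. Qn n * exp (Rr * real n))"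
proof -
  have "summable (\<lambda>n. Qn (Suc n) * exp (Rr * real (Suc n)))"
  proof (rule summable_comparison_test')
    show "summable (\<lambda>n. Kc * exp Rr * gam ^ n)"
      using gam_lt1 gam_gt rho_pos by (intro summable_mult summable_geometric) auto
    show "norm (Qn (Suc n) * exp (Rr * real (Suc n))) \<le> Kc * exp Rr * gam ^ n" for n
      using Qn_exp_bound[of n] Qn_nonneg[of "Suc n"] by simp
  qed
  then show ?thesis by (subst summable_Suc_iff[symmetric])
qed

end



definition pth :: "nat \<Rightarrow> bool list" where "pth j = replicate j False @ [True]"

lemma pth_len: "length (pth j) = Suc j" by (simp add: pth_def)

lemma count_rep: "count_list (replicate j False @ [True]) True = 1"
  by (induction j) auto

lemma pth_zeta: "zeta_of (pth j) = 1" by (simp add: pth_def zeta_of_def count_rep)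

lemma pth_Suc: "pth (Suc j) = False # pth j" by (simp add: pth_def)

lemma fst_abs_le: "\<bar>fst c\<bar> \<le> norm (c :: real \<times> real)"
  using norm_fst_le[of "fst c" "snd c"] by simp
lemma snd_abs_le: "\<bar>snd c\<bar> \<le> norm (c :: real \<times> real)"
  using norm_snd_le[of "snd c" "fst c"] by simp

context ctx begin

lemma pth_hit: "length w = v \<Longrightarrow> v - 1 \<le> k + j \<Longrightarrow> hit v (k, w) (pth j)"
proof (induction j arbitrary: k)
  case 0
  have "ystep v (k, w) True = y0 v" using 0 by (intro ystep_hit) auto
  then show ?case by (simp add: pth_def hit_Cons)
next
  case (Suc j)
  have "ystep v (k, w) False = (Suc k, w)" by (simp add: ystep_def)
  moreover have "(Suc k, w) \<noteq> y0 v" by (simp add: y0_def)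
  moreover have "hit v (Suc k, w) (pth j)" using Suc by (intro Suc.IH) auto
  ultimately show ?case by (simp add: pth_Suc hit_Cons)
qed

lemma pth_prob: "valid v (k, w) \<Longrightarrow> 0 < path_prob p v (k, w) (pth j)"
proof (induction j arbitrary: k)
  case 0
  have "d2 \<le> trans_prob p (k, w) True" using transT[OF 0] by simp
  then show ?case using d2pos by (simp add: pth_def)
next
  case (Suc j)
  have "1 - d1 \<le> trans_prob p (k, w) False" using transF[OF Suc.prems] by simp
  moreover have "valid v (Suc k, w)" using Suc.prems by (simp add: valid_def)
  moreover have "ystep v (k, w) False = (Suc k, w)" by (simp add: ystep_def)
  ultimately show ?case using Suc.IH d1lt by (simp add: pth_Suc)
qed

lemma Wt_pth: "v - 1 \<le> j \<Longrightarrow> 0 < Wt (pth j)"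
proof -
  assume j: "v - 1 \<le> j"
  obtain w where y: "y0 v = (0, w)" and lw: "length w = v" and vw: "valid v (0, w)"
    using valid_y0 v1 by (auto simp: y0_def valid_def)
  have "first_return v (pth j)" unfolding first_return_hit y using pth_hit[OF lw, of 0 j] j by simp
  then show ?thesis unfolding Wt_def y using pth_prob[OF vw] by simp
qed

lemma two_paths: "c \<noteq> 0 \<Longrightarrow> \<exists>bs. 0 < Wt bs \<and> fst c * real (length bs) + snd c * real (zeta_of bs) \<noteq> 0"
proof (rule ccontr)
  assume c: "c \<noteq> 0" and "\<not> (\<exists>bs. 0 < Wt bs \<and> fst c * real (length bs) + snd c * real (zeta_of bs) \<noteq> 0)"
  then have h: "\<And>bs. 0 < Wt bs \<Longrightarrow> fst c * real (length bs) + snd c * real (zeta_of bs) = 0" by blast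
  have "fst c * real v + snd c = 0" using h[OF Wt_pth[of "v - 1"]] v1 by (simp add: pth_len pth_zeta)
  moreover have "fst c * real (Suc v) + snd c = 0" using h[OF Wt_pth[of v]] by (simp add: pth_len pth_zeta)
  ultimately have "fst c = 0" "snd c = 0" by (simp_all add: algebra_simps)
  then show False using c by (simp add: prod_eq_iff)
qed

lemma Sg_mono: "(\<And>z. h z \<le> g z) \<Longrightarrow> Sg n h \<le> Sg n g"
  unfolding Sg_def by (intro sum_mono mult_left_mono Wt_nonneg) auto

lemma Sg_strict: "(\<And>z. h z \<le> g z) \<Longrightarrow> 0 < Wt bs \<Longrightarrow> h (zeta_of bs) < g (zeta_of bs) \<Longrightarrow> Sg (length bs) h < Sg (length bs) g"
  unfolding Sg_def
  by (intro sum_strict_mono_ex1 fin_len) (auto intro!: mult_left_mono Wt_nonneg bexI[of _ bs])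

lemma Sg_add: "Sg n (\<lambda>z. a z + b z) = Sg n a + Sg n b"
  unfolding Sg_def by (simp add: distrib_left sum.distrib)

lemma Sg_cmult: "Sg n (\<lambda>z. c * a z) = c * Sg n a"
  unfolding Sg_def by (simp add: sum_distrib_left algebra_simps)

lemma Sg_diff: "Sg n (\<lambda>z. a z - b z) = Sg n a - Sg n b"
  unfolding Sg_def by (simp add: right_diff_distrib sum_subtractf)

lemma zeta_le: "zeta_of bs \<le> length bs"
  by (simp add: zeta_of_def count_le_length)

lemma Sg_cong_len: "(\<And>z. z \<le> n \<Longrightarrow> h z = g z) \<Longrightarrow> Sg n h = Sg n g"
  unfolding Sg_def using zeta_le by (intro sum.cong) auto

lemma Sg_mono_len: "(\<And>z. z \<le> n \<Longrightarrow> h z \<le> g z) \<Longrightarrow> Sg n h \<le> Sg n g"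
  unfolding Sg_def using zeta_le by (intro sum_mono mult_left_mono Wt_nonneg) force+

definition Sn :: "nat \<Rightarrow> real \<times> real \<Rightarrow> real" where
  "Sn n c = Sg n (\<lambda>z. exp (fst c * real n + snd c * real z))"

definition Tn :: "nat \<Rightarrow> real" where "Tn n = Sg n (\<lambda>_. real n)"
definition Zn :: "nat \<Rightarrow> real" where "Zn n = Sg n (\<lambda>z. real z)"

lemma Sn_nonneg: "0 \<le> Sn n c" unfolding Sn_def by (rule Sg_nonneg) simp

lemma Tn_eq: "Tn n = real n * Qn n"
  unfolding Tn_def Qn_def using Sg_cmult[of n "real n" "\<lambda>_. 1"] by simp

lemma Sn_bound: "\<bar>fst c\<bar> + \<bar>snd c\<bar> \<le> Rr \<Longrightarrow> Sn n c \<le> Qn n * exp (Rr * real n)"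
proof -
  assume c: "\<bar>fst c\<bar> + \<bar>snd c\<bar> \<le> Rr"
  have "Sn n c \<le> Sg n (\<lambda>_. exp (Rr * real n) * 1)"
    unfolding Sn_def
  proof (rule Sg_mono_len)
    fix z assume z: "z \<le> n"
    have "fst c * real n \<le> \<bar>fst c\<bar> * real n" by (simp add: abs_mult_pos' mult_right_mono)
    moreover have "snd c * real z \<le> \<bar>snd c\<bar> * real n"
      using z by (metis abs_ge_self abs_ge_zero mult_mono of_nat_0_le_iff of_nat_mono)
    moreover have "(\<bar>fst c\<bar> + \<bar>snd c\<bar>) * real n \<le> Rr * real n" using c by (simp add: mult_right_mono)
    ultimately show "exp (fst c * real n + snd c * real z) \<le> exp (Rr * real n) * 1"
      by (simp add: distrib_right)
  qed
  also have "\<dots> = exp (Rr * real n) * Qn n" unfolding Qn_def by (rule Sg_cmult)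
  finally show ?thesis by (simp add: mult.commute)
qed

lemma summable_Sn: "\<bar>fst c\<bar> + \<bar>snd c\<bar> \<le> Rr \<Longrightarrow> summable (\<lambda>n. Sn n c)"
  by (rule summable_comparison_test'[OF summable_Qexp]) (simp add: Sn_nonneg Sn_bound)

lemma summable_ball: "norm c < Rr / 2 \<Longrightarrow> summable (\<lambda>n. Sn n c)"
  using fst_abs_le[of c] snd_abs_le[of c] by (intro summable_Sn) simp

lemma Tn_bound: "Tn n \<le> Qn n * exp (Rr * real n) / Rr"
proof -
  have "Rr * real n \<le> exp (Rr * real n)" using exp_gt_self[of "Rr * real n"] by simp
  then have "real n \<le> exp (Rr * real n) / Rr" using Rr_pos by (simp add: field_simps)
  then show ?thesis unfolding Tn_eq using Qn_nonneg[of n]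
    by (metis mult.commute mult_left_mono times_divide_eq_right)
qed

lemma Tn_nonneg: "0 \<le> Tn n" by (simp add: Tn_eq Qn_nonneg)
lemma Zn_nonneg: "0 \<le> Zn n" unfolding Zn_def by (rule Sg_nonneg) simp
lemma Zn_le: "Zn n \<le> Tn n" unfolding Zn_def Tn_def by (rule Sg_mono_len) simp

lemma summable_Tn: "summable Tn"
  by (rule summable_comparison_test'[of "\<lambda>n. Qn n * exp (Rr * real n) / Rr"])
     (auto intro: summable_divide summable_Qexp simp: Tn_nonneg Tn_bound)

lemma summable_Zn: "summable Zn"
  by (rule summable_comparison_test'[OF summable_Tn]) (simp add: Zn_nonneg Zn_le)

definition Tt :: real where "Tt = suminf Tn"
definition Zz :: real where "Zz = suminf Zn"

lemma Tt_pos: "0 < Tt"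
proof -
  have "0 < Tn v" using Wt_pth[of "v-1"] v1 unfolding Tn_def
    using Sg_strict[of "\<lambda>_. 0" "\<lambda>_. real v" "pth (v-1)"] by (simp add: pth_len Sg_def)
  then show ?thesis unfolding Tt_def using summable_Tn Tn_nonneg
    by (metis suminf_pos_iff)
qed

lemma a_eq: "a_param p v = Zz / Tt"
proof -
  have "excursion_E p v (\<lambda>t z. real z) = (\<Sum>n. ennreal (Zn n))"
    unfolding Zn_def by (subst bridge) auto
  also have "\<dots> = ennreal Zz" unfolding Zz_def by (rule suminf_ennreal2[OF Zn_nonneg summable_Zn])
  finally have 1: "excursion_E p v (\<lambda>t z. real z) = ennreal Zz" .
  have "excursion_E p v (\<lambda>t z. real t) = (\<Sum>n. ennreal (Tn n))"
    unfolding Tn_def by (subst bridge) auto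
  also have "\<dots> = ennreal Tt" unfolding Tt_def by (rule suminf_ennreal2[OF Tn_nonneg summable_Tn])
  finally have 2: "excursion_E p v (\<lambda>t z. real t) = ennreal Tt" .
  note 1 2
  moreover have "0 \<le> Zz" unfolding Zz_def using summable_Zn Zn_nonneg by (simp add: suminf_nonneg)
  ultimately show ?thesis unfolding a_param_def using Tt_pos by simp
qed

lemma Sn_lin: "Sn n c \<ge> Qn n + fst c * Tn n + snd c * Zn n"
proof -
  have "Qn n + fst c * Tn n + snd c * Zn n = Sg n (\<lambda>z. 1 + fst c * real n + snd c * real z)"
    unfolding Qn_def Tn_def Zn_def by (simp add: Sg_add Sg_cmult)
  also have "\<dots> \<le> Sn n c" unfolding Sn_def
    by (rule Sg_mono) (metis add.assoc exp_ge_add_one_self)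
  finally show ?thesis .
qed

lemma first_order:
  assumes s: "summable (\<lambda>n. Sn n c)"
  shows "1 + fst c * Tt + snd c * Zz \<le> suminf (\<lambda>n. Sn n c)"
    and "c \<noteq> 0 \<Longrightarrow> 1 + fst c * Tt + snd c * Zz < suminf (\<lambda>n. Sn n c)"
proof -
  define L where "L n = Qn n + fst c * Tn n + snd c * Zn n" for n
  have sL: "L sums (1 + fst c * Tt + snd c * Zz)"
    unfolding L_def Tt_def Zz_def
    by (intro sums_add Qn_sums sums_mult summable_sums summable_Tn summable_Zn)
  have sD: "summable (\<lambda>n. Sn n c - L n)" using s sL by (intro summable_diff) (auto simp: sums_iff)
  have D0: "0 \<le> Sn n c - L n" for n using Sn_lin[of n c] by (simp add: L_def)
  have eq: "suminf (\<lambda>n. Sn n c) = (1 + fst c * Tt + snd c * Zz) + suminf (\<lambda>n. Sn n c - L n)"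
    using suminf_diff[OF s, of L] sL by (simp add: sums_iff)
  show "1 + fst c * Tt + snd c * Zz \<le> suminf (\<lambda>n. Sn n c)"
    unfolding eq using sD D0 by (simp add: suminf_nonneg)
  assume c: "c \<noteq> 0"
  obtain bs where bs: "0 < Wt bs" "fst c * real (length bs) + snd c * real (zeta_of bs) \<noteq> 0"
    using two_paths[OF c] by blast
  have "L (length bs) < Sn (length bs) c"
  proof -
    have "L (length bs) = Sg (length bs) (\<lambda>z. 1 + (fst c * real (length bs) + snd c * real z))"
      unfolding L_def Qn_def Tn_def Zn_def by (simp add: Sg_add Sg_cmult add.assoc)
    also have "\<dots> < Sn (length bs) c" unfolding Sn_def
      by (rule Sg_strict[OF _ bs(1)]) (auto intro: exp_strict[OF bs(2)])
    finally show ?thesis .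
  qed
  then have "0 < suminf (\<lambda>n. Sn n c - L n)"
    using sD D0 by (subst suminf_pos_iff) auto
  then show "1 + fst c * Tt + snd c * Zz < suminf (\<lambda>n. Sn n c)" unfolding eq by simp
qed

lemma Sn_convex: "0 \<le> t \<Longrightarrow> t \<le> 1 \<Longrightarrow> Sn n ((1 - t) *\<^sub>R c1 + t *\<^sub>R c2) \<le> (1 - t) * Sn n c1 + t * Sn n c2"
proof -
  assume t: "0 \<le> t" "t \<le> 1"
  have "Sn n ((1 - t) *\<^sub>R c1 + t *\<^sub>R c2) \<le> Sg n (\<lambda>z. (1 - t) * exp (fst c1 * real n + snd c1 * real z) + t * exp (fst c2 * real n + snd c2 * real z))"
    unfolding Sn_def
  proof (rule Sg_mono)
    fix z
    have "fst ((1 - t) *\<^sub>R c1 + t *\<^sub>R c2) * real n + snd ((1 - t) *\<^sub>R c1 + t *\<^sub>R c2) * real z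
       = (1 - t) * (fst c1 * real n + snd c1 * real z) + (1 - (1 - t)) * (fst c2 * real n + snd c2 * real z)"
      by (simp add: algebra_simps)
    then show "exp (fst ((1 - t) *\<^sub>R c1 + t *\<^sub>R c2) * real n + snd ((1 - t) *\<^sub>R c1 + t *\<^sub>R c2) * real z)
      \<le> (1 - t) * exp (fst c1 * real n + snd c1 * real z) + t * exp (fst c2 * real n + snd c2 * real z)"
      using exp_convex_le[of "1 - t" "fst c1 * real n + snd c1 * real z" "fst c2 * real n + snd c2 * real z"] t by simp
  qed
  also have "\<dots> = (1 - t) * Sn n c1 + t * Sn n c2" unfolding Sn_def by (simp add: Sg_add Sg_cmult)
  finally show ?thesis .
qed

lemma Sn_convex_strict:
  assumes t: "0 < t" "t < 1" and c: "c1 \<noteq> c2"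
  shows "\<exists>n. Sn n ((1 - t) *\<^sub>R c1 + t *\<^sub>R c2) < (1 - t) * Sn n c1 + t * Sn n c2"
proof -
  obtain bs where bs: "0 < Wt bs" "fst (c1 - c2) * real (length bs) + snd (c1 - c2) * real (zeta_of bs) \<noteq> 0"
    using two_paths[of "c1 - c2"] c by auto
  define n where "n = length bs"
  have e: "fst ((1 - t) *\<^sub>R c1 + t *\<^sub>R c2) * real (length bs) + snd ((1 - t) *\<^sub>R c1 + t *\<^sub>R c2) * real z
       = (1 - t) * (fst c1 * real (length bs) + snd c1 * real z) + (1 - (1 - t)) * (fst c2 * real (length bs) + snd c2 * real z)" for z
    by (simp add: algebra_simps)
  have "Sn n ((1 - t) *\<^sub>R c1 + t *\<^sub>R c2) < Sg n (\<lambda>z. (1 - t) * exp (fst c1 * real n + snd c1 * real z) + t * exp (fst c2 * real n + snd c2 * real z))"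
    unfolding Sn_def n_def
  proof (rule Sg_strict[OF _ bs(1)])
    fix z
    show "exp (fst ((1 - t) *\<^sub>R c1 + t *\<^sub>R c2) * real (length bs) + snd ((1 - t) *\<^sub>R c1 + t *\<^sub>R c2) * real z)
      \<le> (1 - t) * exp (fst c1 * real (length bs) + snd c1 * real z) + t * exp (fst c2 * real (length bs) + snd c2 * real z)"
      using exp_convex_le[of "1 - t" "fst c1 * real (length bs) + snd c1 * real z" "fst c2 * real (length bs) + snd c2 * real z"] t e by simp
    have ne: "fst c1 * real (length bs) + snd c1 * real (zeta_of bs) \<noteq> fst c2 * real (length bs) + snd c2 * real (zeta_of bs)"
      using bs(2) by (simp add: algebra_simps)
    show "exp (fst ((1 - t) *\<^sub>R c1 + t *\<^sub>R c2) * real (length bs) + snd ((1 - t) *\<^sub>R c1 + t *\<^sub>R c2) * real (zeta_of bs))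
      < (1 - t) * exp (fst c1 * real (length bs) + snd c1 * real (zeta_of bs)) + t * exp (fst c2 * real (length bs) + snd c2 * real (zeta_of bs))"
      using exp_convex_less[where t="1 - t", OF _ _ ne] t e[of "zeta_of bs"] by simp
  qed
  also have "\<dots> = (1 - t) * Sn n c1 + t * Sn n c2" unfolding Sn_def by (simp add: Sg_add Sg_cmult)
  finally show ?thesis by blast
qed

end



lemma sep:
  fixes S :: "(real \<times> real) set" and u z :: "real \<times> real"
  assumes cS: "compact S" and zS: "z \<in> S" and strict: "\<And>c. c \<in> S \<Longrightarrow> c \<noteq> z \<Longrightarrow> inner c u < inner z u"
    and e: "e > 0"
  shows "\<exists>d>0. \<forall>u'. dist u' u < d \<longrightarrow> (\<forall>c\<in>S. inner z u' \<le> inner c u' \<longrightarrow> dist c z < e)"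
proof -
  define S' where "S' = S \<inter> - ball z e"
  have cS': "compact S'" unfolding S'_def using cS by (intro compact_Int_closed) auto
  show ?thesis
  proof (cases "S' = {}")
    case True
    then have "\<forall>c\<in>S. dist c z < e" unfolding S'_def by (auto simp: dist_commute)
    then show ?thesis by (intro exI[of _ 1]) auto
  next
    case False
    have "continuous_on S' (\<lambda>c. inner z u - inner c u)" by (intro continuous_intros)
    then obtain c0 where c0: "c0 \<in> S'" and mn: "\<And>c. c \<in> S' \<Longrightarrow> inner z u - inner c0 u \<le> inner z u - inner c u"
      using continuous_attains_inf[OF cS' False] by blast
    define \<eta> where "\<eta> = inner z u - inner c0 u"
    have "c0 \<noteq> z" using c0 e unfolding S'_def by auto
    then have eta: "\<eta> > 0" using strict[of c0] c0 unfolding S'_def \<eta>_def by auto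
    obtain B where B: "\<And>c. c \<in> S \<Longrightarrow> norm c \<le> B"
      using compact_imp_bounded[OF cS] by (auto simp: bounded_iff)
    have B0: "0 \<le> B" using B[OF zS] norm_ge_zero[of z] by linarith
    define d where "d = \<eta> / (2 * (B + norm z + 1))"
    have "0 < 2 * (B + norm z + 1)" using B0 norm_ge_zero[of z] by (smt (verit))
    then have d: "d > 0" unfolding d_def by (rule divide_pos_pos[OF eta])
    show ?thesis
    proof (intro exI[of _ d] conjI allI impI ballI)
      show "d > 0" by fact
      fix u' c assume du: "dist u' u < d" and cS: "c \<in> S" and ge: "inner z u' \<le> inner c u'"
      show "dist c z < e"
      proof (rule ccontr)
        assume "\<not> dist c z < e"
        then have cS': "c \<in> S'" using cS unfolding S'_def by (auto simp: dist_commute)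
        have "inner (c - z) (u' - u) \<le> norm (c - z) * norm (u' - u)" by (rule norm_cauchy_schwarz)
        also have "norm (c - z) \<le> B + norm z" using B[OF cS] norm_triangle_ineq4[of c z] by linarith
        then have "norm (c - z) * norm (u' - u) \<le> (B + norm z) * d"
          using du by (intro mult_mono) (auto simp: dist_norm B0)
        also have "(B + norm z) * d \<le> \<eta> / 2"
        proof -
          have "(B + norm z) * d \<le> (B + norm z + 1) * d" using d by simp
          also have "\<dots> = \<eta> / 2"
          proof -
            have gen: "X > 0 \<Longrightarrow> X * (\<eta> / (2 * X)) = \<eta> / 2" for X :: real by (simp add: field_simps)
            have "B + norm z + 1 > 0" using B0 norm_ge_zero[of z] by (smt (verit))
            then show ?thesis unfolding d_def by (rule gen)
          qed
          finally show ?thesis .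
        qed
        finally have 1: "inner (c - z) (u' - u) \<le> \<eta> / 2" .
        have 2: "inner c u \<le> inner z u - \<eta>" using mn[OF cS'] unfolding \<eta>_def by simp
        have "inner c u' - inner z u' = inner (c - z) (u' - u) + (inner c u - inner z u)"
          by (simp add: inner_diff_left inner_diff_right)
        then have "inner c u' - inner z u' < 0" using 1 2 eta by linarith
        then show False using ge by simp
      qed
    qed
  qed
qed




lemma norm_add_scale: "0 \<le> t \<Longrightarrow> norm (c + t *\<^sub>R d) \<le> norm c + t * norm (d::real\<times>real)"
  using norm_triangle_ineq[of c "t *\<^sub>R d"] by simp

lemma frac_le: "0 \<le> (N::real) \<Longrightarrow> 0 \<le> a \<Longrightarrow> a / (N + 1) * N \<le> a"
proof -
  assume N: "0 \<le> N" and a: "0 \<le> a"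
  have "N / (N + 1) \<le> 1" using N by simp
  then have "a * (N / (N + 1)) \<le> a * 1" by (rule mult_left_mono) (use a in simp)
  then show ?thesis by simp
qed

lemma abstract_main:
  fixes Er :: "real \<times> real \<Rightarrow> real" and Cs :: "(real \<times> real) set" and r :: real and u0 :: "real \<times> real"
  assumes r: "r > 0"
    and Cconv: "\<And>c1 c2 t. c1 \<in> Cs \<Longrightarrow> c2 \<in> Cs \<Longrightarrow> 0 \<le> t \<Longrightarrow> t \<le> 1 \<Longrightarrow> (1 - t) *\<^sub>R c1 + t *\<^sub>R c2 \<in> Cs"
    and Cstrict: "\<And>c1 c2 t. c1 \<in> Cs \<Longrightarrow> c2 \<in> Cs \<Longrightarrow> c1 \<noteq> c2 \<Longrightarrow> 0 < t \<Longrightarrow> t < 1 \<Longrightarrow> Er ((1 - t) *\<^sub>R c1 + t *\<^sub>R c2) < 1"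
    and Cdef: "\<And>c. c \<in> ball 0 r \<Longrightarrow> (c \<in> Cs \<longleftrightarrow> Er c \<le> 1)"
    and cont: "continuous_on (ball 0 r) Er"
    and Cle: "\<And>c. c \<in> Cs \<Longrightarrow> Er c \<le> 1"
    and zero: "0 \<in> Cs"
    and u0max: "\<And>c. c \<in> Cs \<Longrightarrow> c \<noteq> 0 \<Longrightarrow> inner c u0 < 0"
    and u0ne: "u0 \<noteq> 0"
  shows "\<exists>\<delta>0>0. \<exists>M. (\<forall>u\<in>ball u0 \<delta>0. M u \<in> Cs \<and> Er (M u) = 1 \<and> (\<forall>c\<in>Cs. inner c u \<le> inner (M u) u)
            \<and> (\<forall>c\<in>Cs. inner c u = inner (M u) u \<longrightarrow> c = M u))
         \<and> (\<forall>u\<in>ball u0 \<delta>0. \<forall>e>0. \<exists>d>0. \<forall>u'\<in>ball u0 \<delta>0. dist u' u < d \<longrightarrow> dist (M u') (M u) < e)"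
proof -
  define r' where "r' = r / 2"
  have r': "r' > 0" "r' < r" using r by (auto simp: r'_def)
  define K where "K = cball (0::real\<times>real) r'"
  have Kb: "K \<subseteq> ball 0 r" using r' by (auto simp: K_def)
  define S where "S = {c \<in> K. Er c \<le> 1}"
  have S_Cs: "S = Cs \<inter> K"
  proof (rule set_eqI)
    fix c
    show "c \<in> S \<longleftrightarrow> c \<in> Cs \<inter> K"
    proof (cases "c \<in> K")
      case True
      then have cb: "c \<in> ball 0 r" using Kb by blast
      show ?thesis using Cdef[OF cb] True by (simp add: S_def)
    next
      case False then show ?thesis by (simp add: S_def)
    qed
  qed
  have cS: "compact S"
  proof -
    have "closed S" unfolding S_def K_def
      by (rule continuous_on_closed_Collect_le) (use continuous_on_subset[OF cont Kb] in \<open>auto simp: K_def\<close>)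
    moreover have "bounded S" unfolding S_def K_def by (rule bounded_subset[OF bounded_cball[of 0 r']]) auto
    ultimately show ?thesis by (simp add: compact_eq_bounded_closed)
  qed
  have zS: "0 \<in> S" using zero r' by (simp add: S_Cs K_def)
  have u0strict: "\<And>c. c \<in> S \<Longrightarrow> c \<noteq> 0 \<Longrightarrow> inner c u0 < inner 0 u0" using u0max S_Cs by auto
  have hr: "r'/2 > 0" using r' by simp
  have "\<exists>d>0. \<forall>u'. dist u' u0 < d \<longrightarrow> (\<forall>c\<in>S. inner 0 u' \<le> inner c u' \<longrightarrow> dist c 0 < r'/2)"
    by (rule sep[OF cS zS _ hr]) (rule u0strict)
  then obtain \<delta>1 where \<delta>1: "\<delta>1 > 0" and sep0': "\<forall>u'. dist u' u0 < \<delta>1 \<longrightarrow> (\<forall>c\<in>S. inner 0 u' \<le> inner c u' \<longrightarrow> dist c 0 < r'/2)"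
    by blast
  have sep0: "\<And>u' c. dist u' u0 < \<delta>1 \<Longrightarrow> c \<in> S \<Longrightarrow> inner 0 u' \<le> inner c u' \<Longrightarrow> dist c 0 < r' / 2"
    using sep0' by blast
  define \<delta>0 where "\<delta>0 = min \<delta>1 (norm u0)"
  have \<delta>0: "\<delta>0 > 0" using \<delta>1 u0ne by (simp add: \<delta>0_def)
  define AM where "AM u c \<longleftrightarrow> c \<in> S \<and> (\<forall>c'\<in>S. inner c' u \<le> inner c u)" for u c
  have uball: "dist u u0 < \<delta>1" "u \<noteq> 0" if "u \<in> ball u0 \<delta>0" for u
  proof -
    have d: "dist u0 u < \<delta>0" using that by simp
    then show "dist u u0 < \<delta>1" unfolding \<delta>0_def by (simp add: dist_commute)
    show "u \<noteq> 0"
    proof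
      assume "u = 0"
      then have "dist u0 u = norm u0" by simp
      then show False using d unfolding \<delta>0_def by simp
    qed
  qed
  have ex: "\<exists>c. AM u c" for u
  proof -
    have "continuous_on S (\<lambda>c. inner c u)" by (intro continuous_intros)
    then show ?thesis unfolding AM_def using continuous_attains_sup[OF cS] zS by blast
  qed
  have loc: "norm c < r' / 2" if "u \<in> ball u0 \<delta>0" "AM u c" for u c
    using sep0[OF uball(1)[OF that(1)], of c] that(2) zS unfolding AM_def by auto
  have glob: "inner c' u \<le> inner c u" if u: "u \<in> ball u0 \<delta>0" and am: "AM u c" and c': "c' \<in> Cs" for u c c'
  proof -
    have cC: "c \<in> Cs" using am S_Cs unfolding AM_def by auto
    define t where "t = min 1 ((r'/2) / (norm (c' - c) + 1))"
    have tp: "0 < (r'/2) / (norm (c' - c) + 1)" using r' by (intro divide_pos_pos) (auto intro: add_nonneg_pos)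
    have t: "0 < t" "t \<le> 1" using tp by (auto simp: t_def)
    have "t * norm (c' - c) \<le> (r'/2) / (norm (c' - c) + 1) * norm (c' - c)"
      unfolding t_def by (intro mult_right_mono) auto
    also have "\<dots> \<le> r'/2" using r' by (intro frac_le) auto
    finally have tn: "t * norm (c' - c) \<le> r'/2" .
    define ct where "ct = (1 - t) *\<^sub>R c + t *\<^sub>R c'"
    have ct_eq: "ct = c + t *\<^sub>R (c' - c)" by (simp add: ct_def algebra_simps)
    have "norm ct \<le> norm c + t * norm (c' - c)" unfolding ct_eq using t by (intro norm_add_scale) simp
    then have "norm ct \<le> r'" using loc[OF u am] tn by linarith
    moreover have "ct \<in> Cs" unfolding ct_def using Cconv[OF cC c'] t by auto
    ultimately have "ct \<in> S" by (simp add: S_Cs K_def)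
    then have "inner ct u \<le> inner c u" using am unfolding AM_def by auto
    then have "t * inner (c' - c) u \<le> 0" unfolding ct_eq by (simp add: inner_add_left)
    then have "inner (c' - c) u \<le> 0" using t by (simp add: mult_le_0_iff)
    then show ?thesis by (simp add: inner_diff_left)
  qed
  have one: "Er c = 1" if u: "u \<in> ball u0 \<delta>0" and am: "AM u c" for u c
  proof (rule ccontr)
    assume ne: "Er c \<noteq> 1"
    have cS: "c \<in> S" using am unfolding AM_def by auto
    then have "Er c \<le> 1" unfolding S_def by auto
    with ne have lt: "Er c < 1" by simp
    have cb: "c \<in> ball 0 r" using cS Kb unfolding S_def by auto
    have lt': "1 - Er c > 0" using lt by simp
    obtain d where d: "d > 0" and dd: "\<And>x. x \<in> ball 0 r \<Longrightarrow> dist x c < d \<Longrightarrow> dist (Er x) (Er c) < 1 - Er c"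
      using cont[unfolded continuous_on_iff, rule_format, OF cb lt'] by blast
    have un: "norm u > 0" using uball(2)[OF u] by simp
    define s where "s = min d (r'/2) / (2 * norm u)"
    have s: "s > 0" using d r' un by (simp add: s_def)
    define x where "x = c + s *\<^sub>R u"
    have sn: "s * norm u = min d (r'/2) / 2" using un by (simp add: s_def)
    have dx: "dist x c = s * norm u" using s by (simp add: x_def dist_norm)
    have "norm x \<le> norm c + s * norm u" unfolding x_def using s by (intro norm_add_scale) simp
    have m1: "min d (r'/2) \<le> r'/2" "min d (r'/2) \<le> d" "0 < min d (r'/2)" using d r' by auto
    then have nx: "norm x \<le> r'" using loc[OF u am] sn \<open>norm x \<le> norm c + s * norm u\<close> by linarith
    then have xb: "x \<in> ball 0 r" using r' by simp
    have "dist x c < d" using dx sn d m1 by linarith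
    then have "Er x < 1" using dd[OF xb] by (simp add: dist_real_def abs_less_iff)
    then have "x \<in> S" using nx Kb by (simp add: S_def K_def)
    then have "inner x u \<le> inner c u" using am unfolding AM_def by auto
    moreover have "inner x u = inner c u + s * inner u u" by (simp add: x_def inner_add_left)
    moreover have "inner u u > 0" using uball(2)[OF u] by simp
    then have "s * inner u u > 0" using s by (rule mult_pos_pos[rotated])
    ultimately show False by linarith
  qed
  have uniq: "c2 = c" if u: "u \<in> ball u0 \<delta>0" and am: "AM u c" and c2: "c2 \<in> Cs" and eq: "inner c2 u = inner c u" for u c c2
  proof (rule ccontr)
    assume ne: "c2 \<noteq> c"
    have cC: "c \<in> Cs" using am S_Cs unfolding AM_def by auto
    define t where "t = min (1/2) ((r'/2) / (norm (c2 - c) + 1))"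
    have tp: "0 < (r'/2) / (norm (c2 - c) + 1)" using r' by (intro divide_pos_pos) (auto intro: add_nonneg_pos)
    have t: "0 < t" "t < 1" using tp by (auto simp: t_def)
    have "t * norm (c2 - c) \<le> (r'/2) / (norm (c2 - c) + 1) * norm (c2 - c)"
      unfolding t_def by (intro mult_right_mono) auto
    also have "\<dots> \<le> r'/2" using r' by (intro frac_le) auto
    finally have tn: "t * norm (c2 - c) \<le> r'/2" .
    define ct where "ct = (1 - t) *\<^sub>R c + t *\<^sub>R c2"
    have ct_eq: "ct = c + t *\<^sub>R (c2 - c)" by (simp add: ct_def algebra_simps)
    have "norm ct \<le> norm c + t * norm (c2 - c)" unfolding ct_eq using t by (intro norm_add_scale) simp
    then have "norm ct \<le> r'" using loc[OF u am] tn by linarith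
    moreover have ctC: "ct \<in> Cs" unfolding ct_def using Cconv[OF cC c2] t by auto
    ultimately have ctS: "ct \<in> S" by (simp add: S_Cs K_def)
    have "inner ct u = inner c u" unfolding ct_eq using eq by (simp add: inner_add_left inner_diff_left)
    then have "AM u ct" using am ctS unfolding AM_def by auto
    then have "Er ct = 1" by (rule one[OF u])
    moreover have "Er ct < 1" unfolding ct_def using Cstrict[OF cC c2 ne[symmetric] t] .
    ultimately show False by simp
  qed
  define M where "M u = (SOME c. AM u c)" for u
  have AM_M: "AM u (M u)" for u unfolding M_def using ex[of u] by (rule someI_ex)
  have props: "M u \<in> Cs \<and> Er (M u) = 1 \<and> (\<forall>c\<in>Cs. inner c u \<le> inner (M u) u)
            \<and> (\<forall>c\<in>Cs. inner c u = inner (M u) u \<longrightarrow> c = M u)" if u: "u \<in> ball u0 \<delta>0" for u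
  proof (intro conjI ballI impI)
    show "M u \<in> Cs" using AM_M[of u] S_Cs unfolding AM_def by blast
    show "Er (M u) = 1" by (rule one[OF u AM_M])
    show "inner c u \<le> inner (M u) u" if "c \<in> Cs" for c by (rule glob[OF u AM_M that])
    show "c = M u" if "c \<in> Cs" "inner c u = inner (M u) u" for c by (rule uniq[OF u AM_M that])
  qed
  have contM: "\<exists>d>0. \<forall>u'\<in>ball u0 \<delta>0. dist u' u < d \<longrightarrow> dist (M u') (M u) < e"
    if u: "u \<in> ball u0 \<delta>0" and e: "e > 0" for u e
  proof -
    have MS: "M u \<in> S" using AM_M unfolding AM_def by auto
    have st: "inner c u < inner (M u) u" if "c \<in> S" "c \<noteq> M u" for c
    proof -
      have cC: "c \<in> Cs" using that S_Cs by auto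
      have "inner c u \<le> inner (M u) u" using props[OF u] cC by auto
      moreover have "inner c u \<noteq> inner (M u) u" using props[OF u] cC that(2) by auto
      ultimately show ?thesis by simp
    qed
    have "\<exists>d>0. \<forall>u'. dist u' u < d \<longrightarrow> (\<forall>c\<in>S. inner (M u) u' \<le> inner c u' \<longrightarrow> dist c (M u) < e)"
      by (rule sep[OF cS MS _ e]) (rule st)
    then obtain d where d: "d > 0" and dd': "\<forall>u'. dist u' u < d \<longrightarrow> (\<forall>c\<in>S. inner (M u) u' \<le> inner c u' \<longrightarrow> dist c (M u) < e)"
      by blast
    have dd: "\<And>u' c. dist u' u < d \<Longrightarrow> c \<in> S \<Longrightarrow> inner (M u) u' \<le> inner c u' \<Longrightarrow> dist c (M u) < e"
      using dd' by blast
    show ?thesis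
    proof (intro exI[of _ d] conjI ballI impI)
      show "d > 0" by fact
      fix u' assume u': "u' \<in> ball u0 \<delta>0" and du: "dist u' u < d"
      have "M u' \<in> S" "inner (M u) u' \<le> inner (M u') u'" using AM_M[of u'] MS unfolding AM_def by auto
      then show "dist (M u') (M u) < e" using dd[OF du] by auto
    qed
  qed
  show ?thesis using \<delta>0 props contM by blast
qed




context ctx begin

definition Er :: "real \<times> real \<Rightarrow> real" where "Er c = suminf (\<lambda>n. Sn n c)"
definition Cs :: "(real \<times> real) set" where "Cs = {c. summable (\<lambda>n. Sn n c) \<and> Er c \<le> 1}"

lemma Er_convex:
  assumes s1: "summable (\<lambda>n. Sn n c1)" and s2: "summable (\<lambda>n. Sn n c2)" and t: "0 \<le> t" "t \<le> 1"
  shows "summable (\<lambda>n. Sn n ((1 - t) *\<^sub>R c1 + t *\<^sub>R c2))"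
    and "Er ((1 - t) *\<^sub>R c1 + t *\<^sub>R c2) \<le> (1 - t) * Er c1 + t * Er c2"
proof -
  have sR: "summable (\<lambda>n. (1 - t) * Sn n c1 + t * Sn n c2)"
    using s1 s2 by (intro summable_add summable_mult)
  show sm: "summable (\<lambda>n. Sn n ((1 - t) *\<^sub>R c1 + t *\<^sub>R c2))"
    by (rule summable_comparison_test'[OF sR]) (use Sn_convex t Sn_nonneg in auto)
  have "Er ((1 - t) *\<^sub>R c1 + t *\<^sub>R c2) \<le> (\<Sum>n. (1 - t) * Sn n c1 + t * Sn n c2)"
    unfolding Er_def by (rule suminf_le[OF _ sm sR]) (use Sn_convex t in auto)
  also have "\<dots> = (1 - t) * Er c1 + t * Er c2"
    unfolding Er_def using s1 s2 by (simp add: suminf_add[symmetric] suminf_mult summable_mult)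
  finally show "Er ((1 - t) *\<^sub>R c1 + t *\<^sub>R c2) \<le> (1 - t) * Er c1 + t * Er c2" .
qed

lemma Er_strict:
  assumes s1: "summable (\<lambda>n. Sn n c1)" and s2: "summable (\<lambda>n. Sn n c2)" and t: "0 < t" "t < 1" and ne: "c1 \<noteq> c2"
  shows "Er ((1 - t) *\<^sub>R c1 + t *\<^sub>R c2) < (1 - t) * Er c1 + t * Er c2"
proof -
  define m where "m = (1 - t) *\<^sub>R c1 + t *\<^sub>R c2"
  have sm: "summable (\<lambda>n. Sn n m)" unfolding m_def using Er_convex(1)[OF s1 s2] t by simp
  have sR: "summable (\<lambda>n. (1 - t) * Sn n c1 + t * Sn n c2)"
    using s1 s2 by (intro summable_add summable_mult)
  have sD: "summable (\<lambda>n. ((1 - t) * Sn n c1 + t * Sn n c2) - Sn n m)" by (rule summable_diff[OF sR sm])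
  have D0: "0 \<le> ((1 - t) * Sn n c1 + t * Sn n c2) - Sn n m" for n
    using Sn_convex[of t n c1 c2] t unfolding m_def by simp
  obtain n where "Sn n m < (1 - t) * Sn n c1 + t * Sn n c2"
    using Sn_convex_strict[OF t ne] unfolding m_def by blast
  then have "0 < (\<Sum>n. ((1 - t) * Sn n c1 + t * Sn n c2) - Sn n m)"
    using sD D0 by (subst suminf_pos_iff) auto
  also have "(\<Sum>n. ((1 - t) * Sn n c1 + t * Sn n c2) - Sn n m) = ((1 - t) * Er c1 + t * Er c2) - Er m"
    unfolding Er_def using s1 s2 sm
    by (simp add: suminf_diff[OF sR sm, symmetric] suminf_add[symmetric] suminf_mult summable_mult)
  finally show ?thesis unfolding m_def by simp
qed

lemma Sn_zero: "Sn n 0 = Qn n"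
  unfolding Sn_def Qn_def by simp

lemma Er_zero: "Er 0 = 1" and summable_zero: "summable (\<lambda>n. Sn n 0)"
  using Qn_sums by (simp_all add: Er_def Sn_zero sums_iff)

lemma Er_pos: "summable (\<lambda>n. Sn n c) \<Longrightarrow> 0 < Er c"
proof -
  assume s: "summable (\<lambda>n. Sn n c)"
  have "0 < Sn (length (pth (v - 1))) c" unfolding Sn_def
    using Sg_strict[of "\<lambda>_. 0" "\<lambda>z. exp (fst c * real (length (pth (v - 1))) + snd c * real z)" "pth (v - 1)"]
      Wt_pth[of "v - 1"] by (simp add: Sg_def)
  then show ?thesis unfolding Er_def using s Sn_nonneg by (subst suminf_pos_iff) auto
qed

lemma Ee_eq: "excursion_E p v (\<lambda>t z. exp (l * real t + m * real z)) = (\<Sum>n. ennreal (Sn n (l, m)))"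
  unfolding Sn_def by (subst bridge) auto

lemma A_summable: "summable (\<lambda>n. Sn n (l, m)) \<Longrightarrow> A_fun p v l m = ereal (ln (Er (l, m)))"
proof -
  assume s: "summable (\<lambda>n. Sn n (l, m))"
  have "excursion_E p v (\<lambda>t z. exp (l * real t + m * real z)) = ennreal (Er (l, m))"
    unfolding Ee_eq Er_def by (rule suminf_ennreal2[OF Sn_nonneg s])
  moreover have "0 \<le> Er (l, m)" using Er_pos[OF s] by simp
  ultimately show ?thesis unfolding A_fun_def by (simp add: Let_def)
qed

lemma A_nsummable: "\<not> summable (\<lambda>n. Sn n (l, m)) \<Longrightarrow> A_fun p v l m = \<infinity>"
proof -
  assume s: "\<not> summable (\<lambda>n. Sn n (l, m))"
  have "(\<Sum>n. ennreal (Sn n (l, m))) = top"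
    using summable_suminf_not_top[of "\<lambda>n. Sn n (l, m)"] Sn_nonneg s by blast
  then show ?thesis unfolding A_fun_def Let_def Ee_eq by simp
qed

lemma A_le0: "A_fun p v l m \<le> 0 \<longleftrightarrow> (l, m) \<in> Cs"
proof (cases "summable (\<lambda>n. Sn n (l, m))")
  case True
  then show ?thesis using Er_pos[OF True] by (simp add: A_summable Cs_def)
next
  case False
  then show ?thesis by (simp add: A_nsummable Cs_def)
qed

lemma A_eq0: "A_fun p v l m = 0 \<longleftrightarrow> (l, m) \<in> Cs \<and> Er (l, m) = 1"
proof (cases "summable (\<lambda>n. Sn n (l, m))")
  case True
  then show ?thesis using Er_pos[OF True] by (auto simp: A_summable Cs_def)
next
  case False
  then show ?thesis by (simp add: A_nsummable Cs_def)
qed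

lemma inner_pair: "inner (a, b) (c, d) = a * c + b * (d::real)"
  by (simp add: inner_prod_def)

lemma main_analysis:
  "\<exists>\<delta>0>0. \<exists>M. (\<forall>u\<in>ball (1::real, a_param p v) \<delta>0. D_fun p v (fst u) (snd u) = inner (M u) u
        \<and> (\<forall>u'\<in>ball (1::real, a_param p v) \<delta>0. inner (M u') u \<le> D_fun p v (fst u) (snd u)))
     \<and> (\<forall>\<alpha>. (1::real, \<alpha>) \<in> ball (1::real, a_param p v) \<delta>0 \<longrightarrow> lam p v \<alpha> = fst (M (1, \<alpha>)) \<and> mu p v \<alpha> = snd (M (1, \<alpha>)))
     \<and> (\<forall>u\<in>ball (1::real, a_param p v) \<delta>0. \<forall>e>0. \<exists>d>0. \<forall>u'\<in>ball (1::real, a_param p v) \<delta>0. dist u' u < d \<longrightarrow> dist (M u') (M u) < e)"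
proof -
  let ?u0 = "(1::real, a_param p v)"
  have r: "Rr / 2 > 0" using Rr_pos by simp
  have Cconv: "(1 - t) *\<^sub>R c1 + t *\<^sub>R c2 \<in> Cs" if "c1 \<in> Cs" "c2 \<in> Cs" "0 \<le> t" "t \<le> 1" for c1 c2 t
  proof -
    have s: "summable (\<lambda>n. Sn n c1)" "summable (\<lambda>n. Sn n c2)" "Er c1 \<le> 1" "Er c2 \<le> 1" using that by (auto simp: Cs_def)
    have "(1 - t) * Er c1 + t * Er c2 \<le> (1 - t) * 1 + t * 1"
      using s that by (intro add_mono mult_left_mono) auto
    then show ?thesis using Er_convex[OF s(1,2) that(3,4)] by (simp add: Cs_def)
  qed
  have Cstrict: "Er ((1 - t) *\<^sub>R c1 + t *\<^sub>R c2) < 1" if "c1 \<in> Cs" "c2 \<in> Cs" "c1 \<noteq> c2" "0 < t" "t < 1" for c1 c2 t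
  proof -
    have s: "summable (\<lambda>n. Sn n c1)" "summable (\<lambda>n. Sn n c2)" "Er c1 \<le> 1" "Er c2 \<le> 1" using that by (auto simp: Cs_def)
    have "(1 - t) * Er c1 + t * Er c2 \<le> (1 - t) * 1 + t * 1"
      using s that by (intro add_mono mult_left_mono) auto
    then show ?thesis using Er_strict[OF s(1,2) that(4,5,3)] by simp
  qed
  have Cdef: "c \<in> Cs \<longleftrightarrow> Er c \<le> 1" if "c \<in> ball 0 (Rr / 2)" for c
    using summable_ball[of c] that by (simp add: Cs_def)
  have cont: "continuous_on (ball 0 (Rr / 2)) Er"
  proof (rule convex_on_continuous)
    show "convex_on (ball 0 (Rr / 2)) Er"
    proof (rule convex_onI)
      fix t :: real and x y :: "real \<times> real" assume "0 < t" "t < 1" "x \<in> ball 0 (Rr / 2)" "y \<in> ball 0 (Rr / 2)"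
      then show "Er ((1 - t) *\<^sub>R x + t *\<^sub>R y) \<le> (1 - t) * Er x + t * Er y"
        using Er_convex(2)[OF summable_ball summable_ball, of x y t] by simp
    qed simp
  qed simp
  have Cle: "Er c \<le> 1" if "c \<in> Cs" for c using that by (simp add: Cs_def)
  have zero: "0 \<in> Cs" using Er_zero summable_zero by (simp add: Cs_def)
  have u0max: "inner c ?u0 < 0" if "c \<in> Cs" "c \<noteq> 0" for c
  proof -
    have s: "summable (\<lambda>n. Sn n c)" "Er c \<le> 1" using that by (auto simp: Cs_def)
    have "1 + fst c * Tt + snd c * Zz < Er c" unfolding Er_def by (rule first_order(2)[OF s(1) that(2)])
    then have neg: "fst c * Tt + snd c * Zz < 0" using s by simp
    have "inner c ?u0 = fst c + snd c * (Zz / Tt)" using a_eq by (cases c) (simp add: inner_pair)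
    also have "\<dots> = (fst c * Tt + snd c * Zz) / Tt" using Tt_pos by (simp add: field_simps)
    also have "\<dots> < 0" using neg Tt_pos by (simp add: divide_neg_pos)
    finally show ?thesis .
  qed
  have u0ne: "?u0 \<noteq> 0" by (simp add: zero_prod_def)
  have ex: "\<exists>\<delta>0>0. \<exists>M. (\<forall>u\<in>ball ?u0 \<delta>0. M u \<in> Cs \<and> Er (M u) = 1 \<and> (\<forall>c\<in>Cs. inner c u \<le> inner (M u) u)
            \<and> (\<forall>c\<in>Cs. inner c u = inner (M u) u \<longrightarrow> c = M u))
         \<and> (\<forall>u\<in>ball ?u0 \<delta>0. \<forall>e>0. \<exists>d>0. \<forall>u'\<in>ball ?u0 \<delta>0. dist u' u < d \<longrightarrow> dist (M u') (M u) < e)"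
    by (rule abstract_main[OF r _ _ _ cont _ zero _ u0ne]) (rule Cconv Cstrict Cdef Cle u0max; assumption)+
  then obtain \<delta>0 M where \<delta>0: "\<delta>0 > 0"
    and P': "\<forall>u\<in>ball ?u0 \<delta>0. M u \<in> Cs \<and> Er (M u) = 1 \<and> (\<forall>c\<in>Cs. inner c u \<le> inner (M u) u)
            \<and> (\<forall>c\<in>Cs. inner c u = inner (M u) u \<longrightarrow> c = M u)"
    and C: "\<forall>u\<in>ball ?u0 \<delta>0. \<forall>e>0. \<exists>d>0. \<forall>u'\<in>ball ?u0 \<delta>0. dist u' u < d \<longrightarrow> dist (M u') (M u) < e"
    by blast
  have P: "M u \<in> Cs \<and> Er (M u) = 1 \<and> (\<forall>c\<in>Cs. inner c u \<le> inner (M u) u)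
            \<and> (\<forall>c\<in>Cs. inner c u = inner (M u) u \<longrightarrow> c = M u)" if "u \<in> ball ?u0 \<delta>0" for u
    using P' that by blast
  have D_eq: "D_fun p v (fst u) (snd u) = inner (M u) u" if u: "u \<in> ball ?u0 \<delta>0" for u
  proof -
    obtain l0 m0 where M0: "M u = (l0, m0)" by fastforce
    obtain th al where uu: "u = (th, al)" by fastforce
    have "Sup {l * th + m * al |l m. A_fun p v l m \<le> 0} = l0 * th + m0 * al"
    proof (rule cSup_eq_maximum)
      show "l0 * th + m0 * al \<in> {l * th + m * al |l m. A_fun p v l m \<le> 0}"
        using P[OF u] M0 by (auto simp: A_le0)
      fix x assume "x \<in> {l * th + m * al |l m. A_fun p v l m \<le> 0}"
      then obtain l m where x: "x = l * th + m * al" and "(l, m) \<in> Cs" by (auto simp: A_le0)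
      then have "inner (l, m) u \<le> inner (M u) u" using P[OF u] by blast
      then show "x \<le> l0 * th + m0 * al" using x M0 uu by (simp add: inner_pair)
    qed
    then show ?thesis unfolding D_fun_def using M0 uu by (simp add: inner_pair)
  qed
  have D_ge: "inner (M u') u \<le> D_fun p v (fst u) (snd u)" if "u \<in> ball ?u0 \<delta>0" "u' \<in> ball ?u0 \<delta>0" for u u'
  proof -
    have "M u' \<in> Cs" using P[OF that(2)] by blast
    then have "inner (M u') u \<le> inner (M u) u" using P[OF that(1)] by blast
    then show ?thesis using D_eq[OF that(1)] by simp
  qed
  have LM: "lam p v \<alpha> = fst (M (1, \<alpha>)) \<and> mu p v \<alpha> = snd (M (1, \<alpha>))" if u: "(1, \<alpha>) \<in> ball ?u0 \<delta>0" for \<alpha>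
  proof -
    have "lam_mu p v \<alpha> = M (1, \<alpha>)"
      unfolding lam_mu_def
    proof (rule some_equality)
      obtain l0 m0 where M0: "M (1, \<alpha>) = (l0, m0)" by fastforce
      have "(l0, m0) \<in> Cs" "Er (l0, m0) = 1" using P[OF u] M0 by auto
      moreover have "l0 + \<alpha> * m0 = D_fun p v 1 \<alpha>" using D_eq[OF u] M0 by (simp add: inner_pair mult.commute)
      ultimately show "case M (1, \<alpha>) of (l, m) \<Rightarrow> A_fun p v l m = 0 \<and> l + \<alpha> * m = D_fun p v 1 \<alpha>"
        using M0 by (simp add: A_eq0)
    next
      fix x assume hx: "case x of (l, m) \<Rightarrow> A_fun p v l m = 0 \<and> l + \<alpha> * m = D_fun p v 1 \<alpha>"
      obtain l m where x: "x = (l, m)" by fastforce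
      have "(l, m) \<in> Cs" "l + \<alpha> * m = D_fun p v 1 \<alpha>" using hx x by (auto simp: A_eq0)
      moreover have "D_fun p v 1 \<alpha> = inner (M (1, \<alpha>)) (1, \<alpha>)" using D_eq[OF u] by simp
      ultimately have "inner (l, m) (1, \<alpha>) = inner (M (1, \<alpha>)) (1, \<alpha>)" by (simp add: inner_pair mult.commute)
      then show "x = M (1, \<alpha>)" using P[OF u] \<open>(l, m) \<in> Cs\<close> x by blast
    qed
    then show ?thesis by (simp add: lam_def mu_def)
  qed
  have G1: "\<forall>u\<in>ball ?u0 \<delta>0. D_fun p v (fst u) (snd u) = inner (M u) u
        \<and> (\<forall>u'\<in>ball ?u0 \<delta>0. inner (M u') u \<le> D_fun p v (fst u) (snd u))"
    using D_eq D_ge by simp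
  have G2: "\<forall>\<alpha>. (1, \<alpha>) \<in> ball ?u0 \<delta>0 \<longrightarrow> lam p v \<alpha> = fst (M (1, \<alpha>)) \<and> mu p v \<alpha> = snd (M (1, \<alpha>))"
    using LM by blast
  show ?thesis
    apply (rule exI[of _ \<delta>0], rule conjI[OF \<delta>0], rule exI[of _ M])
    apply (rule conjI[OF G1])
    apply (rule conjI[OF _ C])
    apply (intro allI impI)
    apply (rule LM)
    apply assumption
    done
qed

end



lemma pair_dist_le: "dist (a::real, b::real) (c, d) \<le> \<bar>a - c\<bar> + \<bar>b - d\<bar>"
  using sqrt_sum_squares_le_sum_abs[of "a - c" "b - d"] by (simp add: dist_Pair_Pair dist_real_def)

lemma norm2: "\<bar>fst d\<bar> + \<bar>snd d\<bar> \<le> 2 * norm (d::real\<times>real)"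
  using fst_abs_le[of d] snd_abs_le[of d] by simp

lemma key_ineq:
  fixes n m y \<alpha> L Mu L' Mu' Du Du' :: real
  assumes n: "n > 0" and e1: "Du = L + Mu * \<alpha>" and e2: "Du' = L' * (1 - m / n) + Mu' * (\<alpha> - y / n)"
    and i1: "L * (1 - m / n) + Mu * (\<alpha> - y / n) \<le> Du'" and i2: "L' + Mu' * \<alpha> \<le> Du"
  shows "(L' - L) * m + (Mu' - Mu) * y \<le> - n * Du' + n * Du - L * m - Mu * y"
    and "- n * Du' + n * Du - L * m - Mu * y \<le> 0"
proof -
  have a1: "n * (L * (1 - m / n) + Mu * (\<alpha> - y / n)) = n * L - L * m + n * Mu * \<alpha> - Mu * y"
    using n by (simp add: field_simps)
  have a2: "n * Du' = n * L' - L' * m + n * Mu' * \<alpha> - Mu' * y"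
    using n unfolding e2 by (simp add: field_simps)
  have b1: "n * (L * (1 - m / n) + Mu * (\<alpha> - y / n)) \<le> n * Du'" using i1 n by (intro mult_left_mono) auto
  have b2: "n * (L' + Mu' * \<alpha>) \<le> n * Du" using i2 n by (intro mult_left_mono) auto
  have b3: "n * Du = n * L + n * Mu * \<alpha>" unfolding e1 by (simp add: algebra_simps)
  show "(L' - L) * m + (Mu' - Mu) * y \<le> - n * Du' + n * Du - L * m - Mu * y"
    using a2 b2 by (simp add: algebra_simps)
  show "- n * Du' + n * Du - L * m - Mu * y \<le> 0"
    using a1 b1 b3 by (simp add: algebra_simps)
qed

lemma scale_abs: "0 \<le> (t::real) \<Longrightarrow> t \<le> 1 \<Longrightarrow> \<bar>t * A\<bar> \<le> \<bar>A\<bar>"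
  by (simp add: abs_mult mult_left_le_one_le)

lemma eps_bound:
  fixes A B m y D' :: real
  assumes "A * m + B * y \<le> D'" "D' \<le> 0"
  shows "\<bar>(if A * m + B * y \<noteq> 0 then D' / (A * m + B * y) * A else D' / m)\<bar>
       + \<bar>(if A * m + B * y \<noteq> 0 then D' / (A * m + B * y) * B else 0)\<bar> \<le> \<bar>A\<bar> + \<bar>B\<bar>"
proof (cases "A * m + B * y = 0")
  case True
  then have "D' = 0" using assms by simp
  then show ?thesis using True by simp
next
  case False
  define W where "W = A * m + B * y"
  have W: "W < 0" using False assms unfolding W_def by simp
  have t0: "0 \<le> D' / W" using W assms by (simp add: divide_nonpos_neg)
  have t1: "D' / W \<le> 1" using W assms unfolding W_def by (simp add: divide_le_eq_1)
  have "\<bar>D' / W * A\<bar> \<le> \<bar>A\<bar>" by (rule scale_abs[OF t0 t1])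
  moreover have "\<bar>D' / W * B\<bar> \<le> \<bar>B\<bar>" by (rule scale_abs[OF t0 t1])
  ultimately show ?thesis using False unfolding W_def by simp
qed

lemma eq_holds:
  fixes A B m y D' :: real
  assumes "m \<noteq> 0"
  shows "D' = (if A * m + B * y \<noteq> 0 then D' / (A * m + B * y) * A else D' / m) * m
            + (if A * m + B * y \<noteq> 0 then D' / (A * m + B * y) * B else 0) * y"
proof (cases "A * m + B * y = 0")
  case True then show ?thesis using assms by simp
next
  case False
  have g: "t * A * m + t * B * y = t * (A * m + B * y)" for t :: real by (simp add: algebra_simps)
  have "D' / (A * m + B * y) * A * m + D' / (A * m + B * y) * B * y = D' / (A * m + B * y) * (A * m + B * y)"
    by (rule g)
  also have "\<dots> = D'" using False by simp
  finally show ?thesis using False by simp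
qed

lemma B_finite: "finite (B_set k n)"
proof -
  have "B_set k n \<subseteq> {-\<lfloor>real n * k\<rfloor>..\<lfloor>real n * k\<rfloor>} \<times> {-\<lfloor>real n * k\<rfloor>..\<lfloor>real n * k\<rfloor>}"
    unfolding B_set_def by auto
  then show ?thesis by (rule finite_subset) auto
qed

lemma tri3: "\<bar>(a - b) - c\<bar> \<le> \<bar>b\<bar> + \<bar>a - (c::real)\<bar>"
  by (smt (verit))

lemma inner_pair2: "inner (a, b) (c, d) = a * c + b * (d::real)"
  by (simp add: inner_prod_def)

lemma final_seq:
  fixes D :: "real \<Rightarrow> real \<Rightarrow> real" and lamf muf :: "real \<Rightarrow> real" and M :: "real \<times> real \<Rightarrow> real \<times> real" and a \<delta>0 :: real
  assumes \<delta>0: "\<delta>0 > 0"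
   and G1: "\<forall>u\<in>ball (1::real, a) \<delta>0. D (fst u) (snd u) = inner (M u) u \<and> (\<forall>u'\<in>ball (1::real, a) \<delta>0. inner (M u') u \<le> D (fst u) (snd u))"
   and G2: "\<forall>\<alpha>. (1::real, \<alpha>) \<in> ball (1::real, a) \<delta>0 \<longrightarrow> lamf \<alpha> = fst (M (1, \<alpha>)) \<and> muf \<alpha> = snd (M (1, \<alpha>))"
   and C: "\<forall>u\<in>ball (1::real, a) \<delta>0. \<forall>e>0. \<exists>d>0. \<forall>u'\<in>ball (1::real, a) \<delta>0. dist u' u < d \<longrightarrow> dist (M u') (M u) < e"
  shows "\<exists>\<Delta>>0. \<forall>(x :: nat \<Rightarrow> real) (\<kappa> :: nat \<Rightarrow> real) \<alpha>0.
     (\<lambda>n. x n / real n) \<longlonglongrightarrow> \<alpha>0 \<longrightarrow> \<bar>a - \<alpha>0\<bar> \<le> \<Delta> \<longrightarrow> \<kappa> \<longlonglongrightarrow> 0 \<longrightarrow>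
     (\<exists>\<epsilon> \<theta> :: nat \<Rightarrow> int \<Rightarrow> int \<Rightarrow> real.
        (\<forall>n m y. (m, y) \<in> B_set (\<kappa> n) n \<longrightarrow>
           - real n * D (1 - real_of_int m / real n) (x n / real n - real_of_int y / real n)
           = - real n * D 1 (x n / real n)
             + (lamf (x n / real n) + \<epsilon> n m y) * real_of_int m
             + (muf (x n / real n) + \<theta> n m y) * real_of_int y)
      \<and> (\<lambda>n. Max (insert 0 {\<bar>\<epsilon> n m y\<bar> + \<bar>\<theta> n m y\<bar> | m y. (m, y) \<in> B_set (\<kappa> n) n}))
           \<longlonglongrightarrow> 0)"
proof (intro exI[of _ "\<delta>0 / 2"] conjI allI impI)
  show "\<delta>0 / 2 > 0" using \<delta>0 by simp
  fix x :: "nat \<Rightarrow> real" and \<kappa> :: "nat \<Rightarrow> real" and \<alpha>0 :: real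
  assume hx: "(\<lambda>n. x n / real n) \<longlonglongrightarrow> \<alpha>0" and ha: "\<bar>a - \<alpha>0\<bar> \<le> \<delta>0 / 2" and hk: "\<kappa> \<longlonglongrightarrow> 0"
  let ?U = "ball (1::real, a) \<delta>0"
  define al where "al n = x n / real n" for n
  define up where "up n m y = (1 - real_of_int m / real n, al n - real_of_int y / real n)" for n and m y :: int
  define L where "L n = lamf (al n)" for n
  define Mu where "Mu n = muf (al n)" for n
  define L' where "L' n m y = fst (M (up n m y))" for n m y
  define Mu' where "Mu' n m y = snd (M (up n m y))" for n m y
  define Dp where "Dp n m y = - real n * D (fst (up n m y)) (snd (up n m y)) + real n * D 1 (al n)
      - L n * real_of_int m - Mu n * real_of_int y" for n m y
  define W where "W n m y = (L' n m y - L n) * real_of_int m + (Mu' n m y - Mu n) * real_of_int y" for n m y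
  define \<epsilon> where "\<epsilon> n m y = (if W n m y \<noteq> 0 then Dp n m y / W n m y * (L' n m y - L n) else Dp n m y / real_of_int m)" for n m y
  define \<theta> where "\<theta> n m y = (if W n m y \<noteq> 0 then Dp n m y / W n m y * (Mu' n m y - Mu n) else 0)" for n m y
  have eqs: "\<forall>n m y. (m, y) \<in> B_set (\<kappa> n) n \<longrightarrow>
           - real n * D (1 - real_of_int m / real n) (x n / real n - real_of_int y / real n)
           = - real n * D 1 (x n / real n)
             + (lamf (x n / real n) + \<epsilon> n m y) * real_of_int m
             + (muf (x n / real n) + \<theta> n m y) * real_of_int y"
  proof (intro allI impI)
    fix n m y assume B: "(m, y) \<in> B_set (\<kappa> n) n"
    then have "m \<ge> 1" by (simp add: B_set_def)
    then have m0: "real_of_int m \<noteq> 0" by simp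
    have "Dp n m y = \<epsilon> n m y * real_of_int m + \<theta> n m y * real_of_int y"
      unfolding \<epsilon>_def \<theta>_def W_def by (rule eq_holds[OF m0])
    then show "- real n * D (1 - real_of_int m / real n) (x n / real n - real_of_int y / real n)
           = - real n * D 1 (x n / real n)
             + (lamf (x n / real n) + \<epsilon> n m y) * real_of_int m
             + (muf (x n / real n) + \<theta> n m y) * real_of_int y"
      unfolding Dp_def up_def L_def Mu_def al_def by (simp add: algebra_simps)
  qed
  have conv: "(\<lambda>n. Max (insert 0 {\<bar>\<epsilon> n m y\<bar> + \<bar>\<theta> n m y\<bar> | m y. (m, y) \<in> B_set (\<kappa> n) n})) \<longlonglongrightarrow> 0"
  proof -
    define F where "F n = Max (insert 0 {\<bar>\<epsilon> n m y\<bar> + \<bar>\<theta> n m y\<bar> | m y. (m, y) \<in> B_set (\<kappa> n) n})" for n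
    have finS: "finite {\<bar>\<epsilon> n m y\<bar> + \<bar>\<theta> n m y\<bar> | m y. (m, y) \<in> B_set (\<kappa> n) n}" for n
    proof -
      have "{\<bar>\<epsilon> n m y\<bar> + \<bar>\<theta> n m y\<bar> | m y. (m, y) \<in> B_set (\<kappa> n) n}
          = (\<lambda>(m, y). \<bar>\<epsilon> n m y\<bar> + \<bar>\<theta> n m y\<bar>) ` B_set (\<kappa> n) n" by auto
      then show ?thesis using B_finite by simp
    qed
    have F0: "0 \<le> F n" for n unfolding F_def using finS[of n] by (intro Max_ge) auto
    show "(\<lambda>n. Max (insert 0 {\<bar>\<epsilon> n m y\<bar> + \<bar>\<theta> n m y\<bar> | m y. (m, y) \<in> B_set (\<kappa> n) n})) \<longlonglongrightarrow> 0"
      unfolding F_def[symmetric]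
    proof (rule LIMSEQ_I)
      fix e :: real assume e: "0 < e"
      define u1 where "u1 = (1::real, \<alpha>0)"
      have du1: "dist (1::real, a) u1 \<le> \<delta>0 / 2" unfolding u1_def using pair_dist_le[of 1 a 1 \<alpha>0] ha by simp
      have u1U: "u1 \<in> ?U" using du1 \<delta>0 by simp
      define r1 where "r1 = \<delta>0 - dist (1::real, a) u1"
      have r1: "r1 > 0" using du1 \<delta>0 by (simp add: r1_def)
      have inU: "w \<in> ?U" if "dist w u1 < r1" for w
        using dist_triangle[of "(1::real, a)" w u1] that by (simp add: r1_def dist_commute)
      have "e / 8 > 0" using e by simp
      then obtain d where d: "d > 0" and dd: "\<And>w. w \<in> ?U \<Longrightarrow> dist w u1 < d \<Longrightarrow> dist (M w) (M u1) < e / 8"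
        using C u1U by blast
      define d' where "d' = min d r1"
      have d': "d' > 0" "d' \<le> d" "d' \<le> r1" using d r1 by (auto simp: d'_def)
      obtain N1 where N1: "\<And>n. n \<ge> N1 \<Longrightarrow> \<bar>al n - \<alpha>0\<bar> < d' / 2"
        using LIMSEQ_D[OF hx, of "d' / 2"] d' unfolding al_def by auto
      obtain N2 where N2: "\<And>n. n \<ge> N2 \<Longrightarrow> \<bar>\<kappa> n\<bar> < d' / 4"
        using LIMSEQ_D[OF hk, of "d' / 4"] d' by auto
      show "\<exists>no. \<forall>n\<ge>no. norm (F n - 0) < e"
      proof (intro exI[of _ "max (max N1 N2) 1"] allI impI)
        fix n assume n: "max (max N1 N2) 1 \<le> n"
        then have n1: "n \<ge> N1" "n \<ge> N2" "n \<ge> 1" by auto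
        have npos: "real n > 0" using n1 by simp
        define u where "u = (1::real, al n)"
        have du: "dist u u1 < d' / 2" using pair_dist_le[of 1 "al n" 1 \<alpha>0] N1[OF n1(1)] by (simp add: u_def u1_def)
        have uU: "u \<in> ?U" using inU du d' by simp
        have Mu1: "dist (M u) (M u1) < e / 8" using dd[OF uU] du d' by simp
        have LMu: "L n = fst (M u)" "Mu n = snd (M u)" using G2 uU by (simp_all add: L_def Mu_def u_def)
        have bnd: "\<bar>\<epsilon> n m y\<bar> + \<bar>\<theta> n m y\<bar> \<le> e / 2" if B: "(m, y) \<in> B_set (\<kappa> n) n" for m y
        proof -
          have mB: "1 \<le> m" "m \<le> \<lfloor>real n * \<kappa> n\<rfloor>" "\<bar>y\<bar> \<le> \<lfloor>real n * \<kappa> n\<rfloor>" using B by (auto simp: B_set_def)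
          have "real_of_int m \<le> real n * \<kappa> n" using mB(2) by linarith
          then have mn: "real_of_int m / real n \<le> \<kappa> n" using npos by (simp add: divide_le_eq mult.commute)
          have "\<bar>real_of_int y\<bar> \<le> real n * \<kappa> n" using mB(3) by linarith
          then have yn: "\<bar>real_of_int y / real n\<bar> \<le> \<kappa> n" using npos by (simp add: divide_le_eq mult.commute)
          have m0: "0 \<le> real_of_int m / real n" using mB(1) npos by simp
          have kn: "\<kappa> n < d' / 4" using N2[OF n1(2)] by simp
          have "dist (up n m y) u1 \<le> \<bar>(1 - real_of_int m / real n) - 1\<bar> + \<bar>(al n - real_of_int y / real n) - \<alpha>0\<bar>"
            unfolding up_def u1_def by (rule pair_dist_le)
          also have "\<dots> \<le> real_of_int m / real n + \<bar>real_of_int y / real n\<bar> + \<bar>al n - \<alpha>0\<bar>"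
          proof -
            have "\<bar>(1 - real_of_int m / real n) - 1\<bar> = real_of_int m / real n" using m0 by (simp only: abs_minus_cancel diff_diff_eq2 diff_self add_0_left abs_of_nonneg; simp)
            moreover have "\<bar>(al n - real_of_int y / real n) - \<alpha>0\<bar> \<le> \<bar>real_of_int y / real n\<bar> + \<bar>al n - \<alpha>0\<bar>"
              by (rule tri3)
            ultimately show ?thesis by linarith
          qed
          also have "\<dots> < d'" using mn yn kn N1[OF n1(1)] by linarith
          finally have dup: "dist (up n m y) u1 < d'" .
          have upU: "up n m y \<in> ?U" using inU dup d' by simp
          have Mup: "dist (M (up n m y)) (M u1) < e / 8" using dd[OF upU] dup d' by simp
          have Dcomp: "dist (M (up n m y)) (M u) < e / 4"
            using dist_triangle[of "M (up n m y)" "M u" "M u1"] Mup Mu1 by (simp add: dist_commute)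
          have Ga: "D (fst u) (snd u) = inner (M u) u \<and> (\<forall>u'\<in>?U. inner (M u') u \<le> D (fst u) (snd u))"
            using G1 uU by blast
          have Gb: "D (fst (up n m y)) (snd (up n m y)) = inner (M (up n m y)) (up n m y) \<and> (\<forall>u'\<in>?U. inner (M u') (up n m y) \<le> D (fst (up n m y)) (snd (up n m y)))"
            using G1 upU by blast
          have G1u: "D (fst u) (snd u) = inner (M u) u" "inner (M (up n m y)) u \<le> D (fst u) (snd u)"
            using Ga upU by blast+
          have G1up: "D (fst (up n m y)) (snd (up n m y)) = inner (M (up n m y)) (up n m y)"
            "inner (M u) (up n m y) \<le> D (fst (up n m y)) (snd (up n m y))"
            using Gb uU by blast+
          have fu: "fst u = 1" "snd u = al n" by (simp_all add: u_def)
          have fup: "fst (up n m y) = 1 - real_of_int m / real n" "snd (up n m y) = al n - real_of_int y / real n"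
            by (simp_all add: up_def)
          have uu: "u = (1, al n)" by (simp add: u_def)
          have upu: "up n m y = (1 - real_of_int m / real n, al n - real_of_int y / real n)" by (simp add: up_def)
          have Mu_eq: "M u = (L n, Mu n)" by (simp add: LMu)
          have Mup_eq: "M (up n m y) = (L' n m y, Mu' n m y)" by (simp add: L'_def Mu'_def)
          have e1: "D 1 (al n) = L n + Mu n * al n"
            using G1u(1) unfolding Mu_eq by (simp add: uu inner_pair2)
          have e2: "D (1 - real_of_int m / real n) (al n - real_of_int y / real n)
              = L' n m y * (1 - real_of_int m / real n) + Mu' n m y * (al n - real_of_int y / real n)"
            using G1up(1) unfolding Mup_eq by (simp add: upu inner_pair2)
          have i1: "L n * (1 - real_of_int m / real n) + Mu n * (al n - real_of_int y / real n)
              \<le> D (1 - real_of_int m / real n) (al n - real_of_int y / real n)"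
            using G1up(2) unfolding Mu_eq by (simp add: upu inner_pair2)
          have i2: "L' n m y + Mu' n m y * al n \<le> D 1 (al n)"
            using G1u(2) unfolding Mup_eq by (simp add: uu inner_pair2)
          have KI: "(L' n m y - L n) * real_of_int m + (Mu' n m y - Mu n) * real_of_int y \<le> Dp n m y"
               "Dp n m y \<le> 0"
            unfolding Dp_def fup using key_ineq[OF npos e1 e2 i1 i2] by simp_all
          have "\<bar>\<epsilon> n m y\<bar> + \<bar>\<theta> n m y\<bar> \<le> \<bar>L' n m y - L n\<bar> + \<bar>Mu' n m y - Mu n\<bar>"
            unfolding \<epsilon>_def \<theta>_def W_def by (rule eps_bound[OF KI])
          also have "\<dots> = \<bar>fst (M (up n m y) - M u)\<bar> + \<bar>snd (M (up n m y) - M u)\<bar>"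
            by (simp add: L'_def Mu'_def LMu)
          also have "\<dots> \<le> 2 * norm (M (up n m y) - M u)" by (rule norm2)
          also have "\<dots> \<le> e / 2" using Dcomp by (simp add: dist_norm)
          finally show ?thesis .
        qed
        have "F n \<le> e / 2" unfolding F_def
        proof (rule Max.boundedI)
          show "finite (insert 0 {\<bar>\<epsilon> n m y\<bar> + \<bar>\<theta> n m y\<bar> | m y. (m, y) \<in> B_set (\<kappa> n) n})" using finS[of n] by simp
          show "insert 0 {\<bar>\<epsilon> n m y\<bar> + \<bar>\<theta> n m y\<bar> | m y. (m, y) \<in> B_set (\<kappa> n) n} \<noteq> {}" by simp
          fix z assume "z \<in> insert 0 {\<bar>\<epsilon> n m y\<bar> + \<bar>\<theta> n m y\<bar> | m y. (m, y) \<in> B_set (\<kappa> n) n}"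
          then show "z \<le> e / 2" using bnd e by fastforce
        qed
        then show "norm (F n - 0) < e" using F0[of n] e by simp
      qed
    qed
  qed
  show "\<exists>\<epsilon> \<theta> :: nat \<Rightarrow> int \<Rightarrow> int \<Rightarrow> real.
        (\<forall>n m y. (m, y) \<in> B_set (\<kappa> n) n \<longrightarrow>
           - real n * D (1 - real_of_int m / real n) (x n / real n - real_of_int y / real n)
           = - real n * D 1 (x n / real n)
             + (lamf (x n / real n) + \<epsilon> n m y) * real_of_int m
             + (muf (x n / real n) + \<theta> n m y) * real_of_int y)
      \<and> (\<lambda>n. Max (insert 0 {\<bar>\<epsilon> n m y\<bar> + \<bar>\<theta> n m y\<bar> | m y. (m, y) \<in> B_set (\<kappa> n) n}))
           \<longlonglongrightarrow> 0"
    using eqs conv by blast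
qed




theorem lemma4p6:
  fixes v :: nat and p :: "nat \<Rightarrow> bool list \<Rightarrow> real" and \<delta>1 \<delta>2 :: real
  assumes "v \<ge> 1"
    and "0 < \<delta>2" and "\<delta>2 < \<delta>1" and "\<delta>1 < 1"
    and "\<And>k w. length w = v \<Longrightarrow> last w = True \<Longrightarrow> \<delta>2 \<le> p k w \<and> p k w \<le> \<delta>1"
  shows "\<exists>\<Delta>>0. \<forall>(x :: nat \<Rightarrow> real) (\<kappa> :: nat \<Rightarrow> real) \<alpha>0.
     (\<lambda>n. x n / real n) \<longlonglongrightarrow> \<alpha>0 \<longrightarrow> \<bar>a_param p v - \<alpha>0\<bar> \<le> \<Delta> \<longrightarrow> \<kappa> \<longlonglongrightarrow> 0 \<longrightarrow>
     (\<exists>\<epsilon> \<theta> :: nat \<Rightarrow> int \<Rightarrow> int \<Rightarrow> real.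
        (\<forall>n m y. (m, y) \<in> B_set (\<kappa> n) n \<longrightarrow>
           - real n * D_fun p v (1 - real_of_int m / real n) (x n / real n - real_of_int y / real n)
           = - real n * D_fun p v 1 (x n / real n)
             + (lam p v (x n / real n) + \<epsilon> n m y) * real_of_int m
             + (mu p v (x n / real n) + \<theta> n m y) * real_of_int y)
      \<and> (\<lambda>n. Max (insert 0 {\<bar>\<epsilon> n m y\<bar> + \<bar>\<theta> n m y\<bar> | m y. (m, y) \<in> B_set (\<kappa> n) n}))
           \<longlonglongrightarrow> 0)"
proof -
  interpret ctx v p \<delta>1 \<delta>2
    by (unfold_locales) (use assms in auto)
  obtain \<delta>0 M where \<delta>0: "\<delta>0 > 0"
    and G1: "\<forall>u\<in>ball (1::real, a_param p v) \<delta>0. D_fun p v (fst u) (snd u) = inner (M u) u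
        \<and> (\<forall>u'\<in>ball (1::real, a_param p v) \<delta>0. inner (M u') u \<le> D_fun p v (fst u) (snd u))"
    and G2: "\<forall>\<alpha>. (1::real, \<alpha>) \<in> ball (1::real, a_param p v) \<delta>0 \<longrightarrow> lam p v \<alpha> = fst (M (1, \<alpha>)) \<and> mu p v \<alpha> = snd (M (1, \<alpha>))"
    and C: "\<forall>u\<in>ball (1::real, a_param p v) \<delta>0. \<forall>e>0. \<exists>d>0. \<forall>u'\<in>ball (1::real, a_param p v) \<delta>0. dist u' u < d \<longrightarrow> dist (M u') (M u) < e"
    using main_analysis by blast
  show ?thesis by (rule final_seq[OF \<delta>0 G1 G2 C])
qed



end
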